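(* Let $G_L=\langle(12),(23),(34),(67),A\rangle$ and $M_L=\langle(12),(23),(34),(56),(67),A\rangle$ in $GL(7,\mathbb{C})$, as in the context, so that $G_L$ has $12$ right cosets in $M_L$. Let $w_0$ be the unique non-identity element of the center of $M_L$. Consider the action of $M_L$ on the $220$ three-element subsets of the right coset space $G_L\backslash M_L$ given by $\{i,j,k\}\cdot\mu=\{i\mu,j\mu,k\mu\}$, where $(G_L\nu)\mu=G_L(\nu\mu)$. Call a subset $S\subseteq G_L\backslash M_L$ $L$-coherent if no two elements of $S$ are interchanged by the action of $w_0$, and $L$-incoherent otherwise. Then this action has exactly two orbits: one of length $160$, consisting of all $L$-coherent triples, and one of length $60$, consisting of all $L$-incoherent triples.
   Context: A permutation $\sigma\in S_7$ is identified with the $7\times7$ permutation matrix sending $e_i$ to $e_{\sigma(i)}$. The matrix $A$ is \[ A=\begin{pmatrix} 1&0&0&0&0&0&0\\ 0&1&0&0&0&0&0\\ 0&0&-1&0&0&0&1\\ 0&0&0&-1&0&0&1\\ 0&0&-1&-1&1&0&1\\ 0&0&-1&-1&0&1&1\\ 0&0&0&0&0&0&1 \end{pmatrix}. \] $M_L$ is isomorphic to the Coxeter group $W(D_6)$ (order 23040), whose center has order two, and $G_L\cong W(D_5)$ has order 1920. *)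

theory Defs
  imports "Jordan_Normal_Form.Matrix" "HOL-Algebra.Generated_Groups" "HOL-Algebra.Coset"
    "HOL-Combinatorics.Transposition"
begin

definition GL7 :: "complex mat monoid" where
  "GL7 = units_of (ring_mat TYPE(complex) 7 ())"

text \<open>Permutation matrix of a permutation sigma of {1..7}, sending e_i to e_(sigma i).
  Matrix indices are 0-based, so row/column k corresponds to basis vector e_(k+1).\<close>
definition perm_mat7 :: "(nat \<Rightarrow> nat) \<Rightarrow> complex mat" where
  "perm_mat7 \<sigma> = mat 7 7 (\<lambda>(i, j). if i + 1 = \<sigma> (j + 1) then 1 else 0)"

definition tr7 :: "nat \<Rightarrow> nat \<Rightarrow> complex mat" where
  "tr7 a b = perm_mat7 (Transposition.transpose a b)"

definition A_L :: "complex mat" where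
  "A_L = mat_of_rows_list 7
    [[1, 0, 0, 0, 0, 0, 0],
     [0, 1, 0, 0, 0, 0, 0],
     [0, 0, -1, 0, 0, 0, 1],
     [0, 0, 0, -1, 0, 0, 1],
     [0, 0, -1, -1, 1, 0, 1],
     [0, 0, -1, -1, 0, 1, 1],
     [0, 0, 0, 0, 0, 0, 1]]"

definition G_L :: "complex mat set" where
  "G_L = generate GL7 {tr7 1 2, tr7 2 3, tr7 3 4, tr7 6 7, A_L}"

definition M_L :: "complex mat set" where
  "M_L = generate GL7 {tr7 1 2, tr7 2 3, tr7 3 4, tr7 5 6, tr7 6 7, A_L}"

definition w0 :: "complex mat" where
  "w0 = (THE w. w \<in> M_L \<and> w \<noteq> \<one>\<^bsub>GL7\<^esub> \<and>
                 (\<forall>m \<in> M_L. w \<otimes>\<^bsub>GL7\<^esub> m = m \<otimes>\<^bsub>GL7\<^esub> w))"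

definition cosets_L :: "complex mat set set" where
  "cosets_L = {G_L #>\<^bsub>GL7\<^esub> \<nu> | \<nu>. \<nu> \<in> M_L}"

definition cact :: "complex mat set \<Rightarrow> complex mat \<Rightarrow> complex mat set" where
  "cact C \<mu> = C #>\<^bsub>GL7\<^esub> \<mu>"

definition sact :: "complex mat set set \<Rightarrow> complex mat \<Rightarrow> complex mat set set" where
  "sact S \<mu> = (\<lambda>C. cact C \<mu>) ` S"

definition triples_L :: "complex mat set set set" where
  "triples_L = {S. S \<subseteq> cosets_L \<and> card S = 3}"

definition orbit_L :: "complex mat set set \<Rightarrow> complex mat set set set" where
  "orbit_L S = {sact S \<mu> | \<mu>. \<mu> \<in> M_L}"

definition L_coherent :: "complex mat set set \<Rightarrow> bool" where
  "L_coherent S \<longleftrightarrow>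
     \<not> (\<exists>i \<in> S. \<exists>j \<in> S. i \<noteq> j \<and> cact i w0 = j \<and> cact j w0 = i)"

end

theory Submission
  imports Defs
begin


section \<open>Integer matrix computations\<close>

definition conv :: "int list list \<Rightarrow> complex mat" where
  "conv m = mat 7 7 (\<lambda>(i,j). of_int (m!i!j))"

definition wf :: "int list list \<Rightarrow> bool" where
  "wf m \<longleftrightarrow> length m = 7 \<and> (\<forall>r\<in>set m. length r = 7)"

definition imul :: "int list list \<Rightarrow> int list list \<Rightarrow> int list list" where
  "imul a b = (let bt = List.transpose b in map (\<lambda>r. map (\<lambda>c. sum_list (map2 (*) r c)) bt) a)"

lemma conv_carrier[simp]: "conv m \<in> carrier_mat 7 7"
  by (simp add: conv_def)

lemma foldr_max_len: "(\<forall>r\<in>set m. length r = n) \<Longrightarrow> m \<noteq> [] \<Longrightarrow> foldr (\<lambda>xs. max (length xs)) m 0 = n"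
proof (induction m)
  case Nil then show ?case by simp
next
  case (Cons a m)
  then show ?case by (cases "m = []") (auto simp: max_def)
qed

lemma map2_nth: "length xs = n \<Longrightarrow> length ys = n \<Longrightarrow> map2 f xs ys = map (\<lambda>k. f (xs!k) (ys!k)) [0..<n]"
  by (rule nth_equalityI) auto

lemma wf_transpose:
  assumes "wf b"
  shows "length (List.transpose b) = 7" "\<And>j. j < 7 \<Longrightarrow> List.transpose b ! j = map (\<lambda>r. r ! j) b"
proof -
  have b: "length b = 7" "\<forall>r\<in>set b. length r = 7" using assms by (auto simp: wf_def)
  have "b \<noteq> []" using b by auto
  then show l: "length (List.transpose b) = 7" using b by (simp add: length_transpose foldr_max_len)
  fix j :: nat assume j: "j < 7"
  have "filter (\<lambda>ys. j < length ys) b = b" using b j by (auto intro: filter_True)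
  then show "List.transpose b ! j = map (\<lambda>r. r ! j) b"
    using nth_transpose[of j b] l j by simp
qed

lemma imul_nth:
  assumes "wf a" "wf b" "i < 7" "j < 7"
  shows "imul a b ! i ! j = (\<Sum>k<7. a!i!k * b!k!j)"
proof -
  have a: "length a = 7" "\<forall>r\<in>set a. length r = 7" using assms by (auto simp: wf_def)
  have b: "length b = 7" using assms by (auto simp: wf_def)
  have ai: "length (a!i) = 7" using a assms(3) by auto
  have tj: "List.transpose b ! j = map (\<lambda>r. r ! j) b" using wf_transpose[OF assms(2)] assms(4) by auto
  have "imul a b ! i ! j = sum_list (map2 (*) (a!i) (List.transpose b ! j))"
    using a assms wf_transpose[OF assms(2)] by (simp add: imul_def Let_def)
  also have "\<dots> = sum_list (map (\<lambda>k. a!i!k * (map (\<lambda>r. r!j) b)!k) [0..<7])"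
    by (subst map2_nth[where n=7]) (auto simp: ai tj b)
  also have "\<dots> = sum_list (map (\<lambda>k. a!i!k * b!k!j) [0..<7])"
    by (rule arg_cong[where f=sum_list], rule map_cong) (auto simp: b)
  also have "\<dots> = (\<Sum>k<7. a!i!k * b!k!j)"
    by (simp add: sum_set_upt_conv_sum_list_nat[symmetric] atLeast0LessThan)
  finally show ?thesis .
qed

lemma wf_imul: "wf a \<Longrightarrow> wf b \<Longrightarrow> wf (imul a b)"
  using wf_transpose[of b] by (auto simp: wf_def imul_def Let_def)

lemma conv_imul: "wf a \<Longrightarrow> wf b \<Longrightarrow> conv (imul a b) = conv a * conv b"
  by (rule eq_matI)
     (auto simp: conv_def imul_nth scalar_prod_def of_int_sum of_int_mult atLeast0LessThan intro!: sum.cong)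

definition iI :: "int list list" where
  "iI = [[1,0,0,0,0,0,0],[0,1,0,0,0,0,0],[0,0,1,0,0,0,0],[0,0,0,1,0,0,0],[0,0,0,0,1,0,0],[0,0,0,0,0,1,0],[0,0,0,0,0,0,1]]"

lemma wf_iI: "wf iI" by (simp add: wf_def iI_def)

lemma conv_iI: "conv iI = 1\<^sub>m 7"
  by (rule eq_matI) (auto simp: conv_def iI_def less_Suc_eq numeral_eq_Suc)

definition igl :: "int list list list" where
  "igl = [[[0,1,0,0,0,0,0],[1,0,0,0,0,0,0],[0,0,1,0,0,0,0],[0,0,0,1,0,0,0],[0,0,0,0,1,0,0],[0,0,0,0,0,1,0],[0,0,0,0,0,0,1]],[[1,0,0,0,0,0,0],[0,0,1,0,0,0,0],[0,1,0,0,0,0,0],[0,0,0,1,0,0,0],[0,0,0,0,1,0,0],[0,0,0,0,0,1,0],[0,0,0,0,0,0,1]],[[1,0,0,0,0,0,0],[0,1,0,0,0,0,0],[0,0,0,1,0,0,0],[0,0,1,0,0,0,0],[0,0,0,0,1,0,0],[0,0,0,0,0,1,0],[0,0,0,0,0,0,1]],[[1,0,0,0,0,0,0],[0,1,0,0,0,0,0],[0,0,1,0,0,0,0],[0,0,0,1,0,0,0],[0,0,0,0,0,1,0],[0,0,0,0,1,0,0],[0,0,0,0,0,0,1]],[[1,0,0,0,0,0,0],[0,1,0,0,0,0,0],[0,0,1,0,0,0,0],[0,0,0,1,0,0,0],[0,0,0,0,1,0,0],[0,0,0,0,0,0,1],[0,0,0,0,0,1,0]],[[1,0,0,0,0,0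,0],[0,1,0,0,0,0,0],[0,0,-1,0,0,0,1],[0,0,0,-1,0,0,1],[0,0,-1,-1,1,0,1],[0,0,-1,-1,0,1,1],[0,0,0,0,0,0,1]]]"

definition ig :: "nat \<Rightarrow> int list list" where "ig a = igl ! a"

lemma wf_ig: "a < 6 \<Longrightarrow> wf (ig a)"
  by (auto simp: wf_def ig_def igl_def less_Suc_eq numeral_eq_Suc)

definition gM :: "nat \<Rightarrow> complex mat" where "gM a = conv (ig a)"

fun iev :: "nat list \<Rightarrow> int list list" where
  "iev [] = iI" | "iev (a#ws) = imul (ig a) (iev ws)"

fun evw :: "nat list \<Rightarrow> complex mat" where
  "evw [] = 1\<^sub>m 7" | "evw (a#ws) = gM a * evw ws"

lemma evw_iev: "set ws \<subseteq> {..<6} \<Longrightarrow> evw ws = conv (iev ws) \<and> wf (iev ws)"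
  by (induction ws) (auto simp: conv_iI conv_imul gM_def wf_iI wf_ig wf_imul)

lemma evw_carrier[simp]: "evw ws \<in> carrier_mat 7 7"
  proof (induction ws)
  case (Cons a ws) then show ?case using mult_carrier_mat[OF conv_carrier Cons.IH] by (simp add: gM_def)
qed simp

lemma evw_append: "evw (xs @ ys) = evw xs * evw ys"
proof (induction xs)
  case Nil
  show ?case using left_mult_one_mat[OF evw_carrier[of ys]] by simp
next
  case (Cons a xs)
  have "evw xs \<in> carrier_mat 7 7" by (rule evw_carrier)
  moreover have "evw ys \<in> carrier_mat 7 7" by (rule evw_carrier)
  ultimately show ?case using Cons by (simp add: gM_def assoc_mult_mat[of _ 7 7 _ 7 _ 7])
qed

lemma gM_carrier[simp]: "gM a \<in> carrier_mat 7 7" by (simp add: gM_def)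

lemma ig_sq: "list_all (\<lambda>a. imul (ig a) (ig a) = iI) [0..<6]"
  by code_simp

lemma gM_sq: "a < 6 \<Longrightarrow> gM a * gM a = 1\<^sub>m 7"
  using ig_sq conv_imul[OF wf_ig wf_ig, of a a] by (auto simp: gM_def list_all_iff conv_iI)

lemma GL7_mult[simp]: "x \<otimes>\<^bsub>GL7\<^esub> y = x * y"
  by (simp add: GL7_def units_of_mult ring_mat_simps)

lemma GL7_one[simp]: "\<one>\<^bsub>GL7\<^esub> = 1\<^sub>m 7"
  by (simp add: GL7_def units_of_one ring_mat_simps)

lemma GL7_group: "group GL7"
proof -
  interpret ring "ring_mat TYPE(complex) 7 ()" by (rule ring_mat)
  show ?thesis unfolding GL7_def by (rule units_group)
qed

lemma GL7_carrier: "x \<in> carrier GL7 \<Longrightarrow> x \<in> carrier_mat 7 7"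
  by (simp add: GL7_def units_of_carrier Units_def ring_mat_simps)

lemma invol_GL7:
  assumes "x \<in> carrier_mat 7 7" "x * x = 1\<^sub>m 7"
  shows "x \<in> carrier GL7" "inv\<^bsub>GL7\<^esub> x = x"
proof -
  show c: "x \<in> carrier GL7" using assms
    by (auto simp: GL7_def units_of_carrier Units_def ring_mat_simps)
  show "inv\<^bsub>GL7\<^esub> x = x"
    using group.inv_equality[OF GL7_group, of x x] c assms by simp
qed

lemma gM_GL7: "a < 6 \<Longrightarrow> gM a \<in> carrier GL7" "a < 6 \<Longrightarrow> inv\<^bsub>GL7\<^esub> (gM a) = gM a"
  using invol_GL7[OF gM_carrier gM_sq] by auto

lemma tr12: "tr7 1 2 = gM 0"
  unfolding tr7_def perm_mat7_def gM_def ig_def igl_def conv_def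
  by (rule eq_matI) (auto simp: Transposition.transpose_def less_Suc_eq numeral_eq_Suc)
lemma tr23: "tr7 2 3 = gM 1"
  unfolding tr7_def perm_mat7_def gM_def ig_def igl_def conv_def
  by (rule eq_matI) (auto simp: Transposition.transpose_def less_Suc_eq numeral_eq_Suc)
lemma tr34: "tr7 3 4 = gM 2"
  unfolding tr7_def perm_mat7_def gM_def ig_def igl_def conv_def
  by (rule eq_matI) (auto simp: Transposition.transpose_def less_Suc_eq numeral_eq_Suc)
lemma tr56: "tr7 5 6 = gM 3"
  unfolding tr7_def perm_mat7_def gM_def ig_def igl_def conv_def
  by (rule eq_matI) (auto simp: Transposition.transpose_def less_Suc_eq numeral_eq_Suc)
lemma tr67: "tr7 6 7 = gM 4"
  unfolding tr7_def perm_mat7_def gM_def ig_def igl_def conv_def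
  by (rule eq_matI) (auto simp: Transposition.transpose_def less_Suc_eq numeral_eq_Suc)
lemma AL5: "A_L = gM 5"
  unfolding A_L_def mat_of_rows_list_def gM_def ig_def igl_def conv_def
  by (rule eq_matI) (auto simp: less_Suc_eq numeral_eq_Suc)

definition GI :: "nat set" where "GI = {0,1,2,4,5}"
definition MI :: "nat set" where "MI = {0,1,2,3,4,5}"

lemma G_L_gen: "G_L = generate GL7 (gM ` GI)"
  unfolding G_L_def GI_def tr12 tr23 tr34 tr67 AL5 by simp
lemma M_L_gen: "M_L = generate GL7 (gM ` MI)"
  unfolding M_L_def MI_def tr12 tr23 tr34 tr56 tr67 AL5 by simp





lemma MI_iff: "a \<in> MI \<longleftrightarrow> a < 6" by (auto simp: MI_def)
lemma MI_lt: "a \<in> MI \<Longrightarrow> a < 6" by (auto simp: MI_def)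
lemma GI_MI: "GI \<subseteq> MI" by (auto simp: GI_def MI_def)

lemma gens_carrier: "A \<subseteq> MI \<Longrightarrow> gM ` A \<subseteq> carrier GL7"
  using gM_GL7 MI_lt by blast

lemma gen_carrier_mat: "A \<subseteq> MI \<Longrightarrow> m \<in> generate GL7 (gM ` A) \<Longrightarrow> m \<in> carrier_mat 7 7"
  using group.generate_in_carrier[OF GL7_group gens_carrier] GL7_carrier by blast

lemma gen_GL7: "A \<subseteq> MI \<Longrightarrow> m \<in> generate GL7 (gM ` A) \<Longrightarrow> m \<in> carrier GL7"
  using group.generate_in_carrier[OF GL7_group gens_carrier] by blast

lemma evw_gen: "set ws \<subseteq> A \<Longrightarrow> evw ws \<in> generate GL7 (gM ` A)"
proof (induction ws)
  case Nil
  then show ?case using generate.one[of GL7 "gM ` A"] by simp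
next
  case (Cons a ws)
  then have "gM a \<in> generate GL7 (gM ` A)" by (auto intro: generate.incl)
  then show ?case using Cons generate.eng[of "gM a" GL7 "gM ` A" "evw ws"] by simp
qed

lemma gen_right_induct:
  assumes m: "m \<in> generate GL7 (gM ` A)" and A: "A \<subseteq> MI" and R: "R \<subseteq> carrier_mat 7 7"
    and step: "\<And>x a. x \<in> R \<Longrightarrow> a \<in> A \<Longrightarrow> x * gM a \<in> R"
  shows "\<forall>x\<in>R. x * m \<in> R"
  using m
proof (induction m rule: generate.induct)
  case one
  then show ?case using R by auto
next
  case (incl h)
  then show ?case using step by auto
next
  case (inv h)
  then obtain a where a: "a \<in> A" "h = gM a" by auto
  then have "inv\<^bsub>GL7\<^esub> h = gM a" using gM_GL7 A MI_lt by auto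
  then show ?case using step a by auto
next
  case (eng h1 h2)
  have c1: "h1 \<in> carrier_mat 7 7" using gen_carrier_mat[OF A eng.hyps(1)] .
  have c2: "h2 \<in> carrier_mat 7 7" using gen_carrier_mat[OF A eng.hyps(2)] .
  show ?case
  proof
    fix x assume x: "x \<in> R"
    then have "x \<in> carrier_mat 7 7" using R by auto
    then have "x * (h1 * h2) = (x * h1) * h2" using c1 c2 by (simp add: assoc_mult_mat[of _ 7 7 _ 7 _ 7])
    then show "x * (h1 \<otimes>\<^bsub>GL7\<^esub> h2) \<in> R" using eng.IH x by simp
  qed
qed

lemma gen_right_induct1:
  assumes m: "m \<in> generate GL7 (gM ` A)" and A: "A \<subseteq> MI" and R: "R \<subseteq> carrier_mat 7 7"
    and one: "1\<^sub>m 7 \<in> R"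
    and step: "\<And>x a. x \<in> R \<Longrightarrow> a \<in> A \<Longrightarrow> x * gM a \<in> R"
  shows "m \<in> R"
  using gen_right_induct[OF m A R step] one gen_carrier_mat[OF A m] by force

lemma G_L_sub: "subgroup G_L GL7"
  unfolding G_L_gen using group.generate_is_subgroup[OF GL7_group gens_carrier[OF GI_MI]] .
lemma M_L_sub: "subgroup M_L GL7"
  unfolding M_L_gen using group.generate_is_subgroup[OF GL7_group gens_carrier[OF order_refl]] .
lemma G_L_carrier: "G_L \<subseteq> carrier GL7" using G_L_sub subgroup.subset by blast
lemma M_L_carrier: "M_L \<subseteq> carrier GL7" using M_L_sub subgroup.subset by blast
lemma G_L_M_L: "G_L \<subseteq> M_L"
  unfolding G_L_gen M_L_gen using group.mono_generate[OF GL7_group] GI_MI by (simp add: image_mono)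

lemma evw_M_L: "set ws \<subseteq> MI \<Longrightarrow> evw ws \<in> M_L"
  unfolding M_L_gen by (rule evw_gen)
lemma evw_G_L: "set ws \<subseteq> GI \<Longrightarrow> evw ws \<in> G_L"
  unfolding G_L_gen by (rule evw_gen)

definition rowm :: "int list \<Rightarrow> int list list" where
  "rowm l = [l, [0,0,0,0,0,0,0], [0,0,0,0,0,0,0], [0,0,0,0,0,0,0], [0,0,0,0,0,0,0], [0,0,0,0,0,0,0], [0,0,0,0,0,0,0]]"

lemma wf_rowm: "length l = 7 \<Longrightarrow> wf (rowm l)" by (simp add: wf_def rowm_def)

lemma conv_inj: "wf a \<Longrightarrow> wf b \<Longrightarrow> conv a = conv b \<Longrightarrow> a = b"
proof -
  assume a: "wf a" and b: "wf b" and e: "conv a = conv b"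
  show "a = b"
  proof (rule nth_equalityI)
    show "length a = length b" using a b by (simp add: wf_def)
    fix i assume i: "i < length a"
    then have i7: "i < 7" using a by (simp add: wf_def)
    show "a ! i = b ! i"
    proof (rule nth_equalityI)
      show "length (a!i) = length (b!i)" using a b i7 by (simp add: wf_def)
      fix j assume "j < length (a!i)"
      then have j7: "j < 7" using a i7 by (simp add: wf_def)
      have "conv a $$ (i,j) = conv b $$ (i,j)" using e by simp
      then show "a!i!j = b!i!j" using i7 j7 by (simp add: conv_def)
    qed
  qed
qed

definition vv :: "int list" where "vv = [0,0,0,0,1,-1,-1]"
definition ol :: "int list list" where "ol = [[0,0,0,0,1,-1,-1],[0,0,0,0,-1,1,-1],[0,0,0,0,-1,-1,1],[0,0,2,2,-1,-1,-1],[0,2,0,2,-1,-1,-1],[2,0,0,2,-1,-1,-1],[0,2,2,0,-1,-1,-1],[2,0,2,0,-1,-1,-1],[2,2,0,0,-1,-1,-1],[2,2,2,2,-1,-1,-3],[2,2,2,2,-1,-3,-1],[2,2,2,2,-3,-1,-1]]"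
definition wr :: "nat list list" where "wr = [[],[3],[3,4],[3,4,5],[3,4,5,1],[3,4,5,1,0],[3,4,5,1,2],[3,4,5,1,0,2],[3,4,5,1,0,2,1],[3,4,5,1,0,2,1,5],[3,4,5,1,0,2,1,5,4],[3,4,5,1,0,2,1,5,4,3]]"
definition pl :: "nat list list" where "pl = [[0,1,2,3,5,4,7,6,8,9,10,11],[0,1,2,4,3,5,6,8,7,9,10,11],[0,1,2,3,6,7,4,5,8,9,10,11],[1,0,2,3,4,5,6,7,8,9,11,10],[0,2,1,3,4,5,6,7,8,10,9,11],[0,1,3,2,6,7,4,5,9,8,10,11]]"
definition hl :: "nat list list list" where "hl = [[[0],[1],[2],[],[4],[5]],[[0],[1],[2],[],[],[5]],[[0],[1],[2],[4],[],[]],[[0],[],[2],[4],[2,5],[]],[[],[],[],[4],[2,5],[1,2,1]],[[],[0],[],[4],[2,5],[1,2,1]],[[],[2],[],[4],[2,5],[1,2,1]],[[],[],[],[4],[2,5],[1,2,1]],[[2],[],[0],[4],[2,5],[]],[[2],[0,1,2,1,0],[0],[4],[],[]],[[2],[0,1,2,1,0],[0],[],[],[0,2,5]],[[2],[0,1,2,1,0],[0],[],[4],[0,2,5]]]"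
definition Rl :: "int list list list" where "Rl = [[[1,0,0,0,0,0,0],[0,1,0,0,0,0,0],[0,0,1,0,0,0,0],[0,0,0,1,0,0,0],[0,0,0,0,1,0,0],[0,0,0,0,0,1,0],[0,0,0,0,0,0,1]],[[1,0,0,0,0,0,0],[0,1,0,0,0,0,0],[0,0,1,0,0,0,0],[0,0,0,1,0,0,0],[0,0,0,0,0,1,0],[0,0,0,0,1,0,0],[0,0,0,0,0,0,1]],[[1,0,0,0,0,0,0],[0,1,0,0,0,0,0],[0,0,1,0,0,0,0],[0,0,0,1,0,0,0],[0,0,0,0,0,0,1],[0,0,0,0,1,0,0],[0,0,0,0,0,1,0]],[[1,0,0,0,0,0,0],[0,1,0,0,0,0,0],[0,0,-1,0,0,0,1],[0,0,0,-1,0,0,1],[0,0,0,0,0,0,1],[0,0,-1,-1,1,0,1],[0,0,-1,-1,0,1,1]],[[1,0,0,0,0,0,0],[0,0,1,0,0,0,0],[0,-1,0,0,0,0,1],[0,0,0,-1,0,0,1],[0,0,0,0,0,0,1],[0,-1,0,-1,1,0,1],[0,-1,0,-1,0,1,1]],[[0,1,0,0,0,0,0],[0,0,1,0,0,0,0],[-1,0,0,0,0,0,1],[0,0,0,-1,0,0,1],[0,0,0,0,0,0,1],[-1,0,0,-1,1,0,1],[-1,0,0,-1,0,1,1]],[[1,0,0,0,0,0,0],[0,0,0,1,0,0,0],[0,-1,0,0,0,0,1],[0,0,-1,0,0,0,1],[0,0,0,0,0,0,1],[0,-1,-1,0,1,0,1],[0,-1,-1,0,0,1,1]],[[0,1,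0,0,0,0,0],[0,0,0,1,0,0,0],[-1,0,0,0,0,0,1],[0,0,-1,0,0,0,1],[0,0,0,0,0,0,1],[-1,0,-1,0,1,0,1],[-1,0,-1,0,0,1,1]],[[0,0,1,0,0,0,0],[0,0,0,1,0,0,0],[-1,0,0,0,0,0,1],[0,-1,0,0,0,0,1],[0,0,0,0,0,0,1],[-1,-1,0,0,1,0,1],[-1,-1,0,0,0,1,1]],[[0,0,-1,0,0,0,1],[0,0,0,-1,0,0,1],[-1,0,0,0,0,0,1],[0,-1,0,0,0,0,1],[0,0,0,0,0,0,1],[-1,-1,-1,-1,1,0,2],[-1,-1,-1,-1,0,1,2]],[[0,0,-1,0,0,1,0],[0,0,0,-1,0,1,0],[-1,0,0,0,0,1,0],[0,-1,0,0,0,1,0],[0,0,0,0,0,1,0],[-1,-1,-1,-1,1,2,0],[-1,-1,-1,-1,0,2,1]],[[0,0,-1,0,1,0,0],[0,0,0,-1,1,0,0],[-1,0,0,0,1,0,0],[0,-1,0,0,1,0,0],[0,0,0,0,1,0,0],[-1,-1,-1,-1,2,1,0],[-1,-1,-1,-1,2,0,1]]]"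

definition r :: "nat \<Rightarrow> complex mat" where "r i = evw (wr ! i)"
definition Vv :: "complex mat" where "Vv = conv (rowm vv)"

lemma wr_ok: "list_all (\<lambda>w. list_all (\<lambda>a. a < 6) w) wr" by code_simp
lemma wr_MI: "i < 12 \<Longrightarrow> set (wr ! i) \<subseteq> MI"
proof -
  assume i: "i < 12"
  have "length wr = 12" by (simp add: wr_def)
  then have "wr ! i \<in> set wr" using i by simp
  then show ?thesis using wr_ok by (auto simp: list_all_iff MI_iff)
qed

lemma r_M_L: "i < 12 \<Longrightarrow> r i \<in> M_L" using evw_M_L wr_MI r_def by auto
lemma r_GL7: "i < 12 \<Longrightarrow> r i \<in> carrier GL7" using r_M_L M_L_carrier by auto

definition vfix_ok :: "nat \<Rightarrow> bool" where "vfix_ok a = (imul (rowm vv) (ig a) = rowm vv)"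
lemma vv_fix_comp: "list_all vfix_ok [0,1,2,4,5]" by code_simp

lemma Vv_gM: "a \<in> GI \<Longrightarrow> Vv * gM a = Vv"
proof -
  assume a: "a \<in> GI"
  then have "imul (rowm vv) (ig a) = rowm vv" using vv_fix_comp by (auto simp: GI_def vfix_ok_def)
  moreover have "a < 6" using a by (auto simp: GI_def)
  ultimately show ?thesis unfolding Vv_def gM_def
    using conv_imul[OF wf_rowm wf_ig, of vv a] by (simp add: vv_def)
qed

lemma Vv_carrier[simp]: "Vv \<in> carrier_mat 7 7" by (simp add: Vv_def)

lemma Vv_G_L: "g \<in> G_L \<Longrightarrow> Vv * g = Vv"
proof -
  assume g: "g \<in> G_L"
  let ?R = "{x \<in> carrier_mat 7 7. Vv * x = Vv}"
  have "g \<in> ?R"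
  proof (rule gen_right_induct1[OF g[unfolded G_L_gen] GI_MI])
    show "?R \<subseteq> carrier_mat 7 7" by auto
    show "1\<^sub>m 7 \<in> ?R" using right_mult_one_mat[OF Vv_carrier] by simp
    fix x a assume x: "x \<in> ?R" and a: "a \<in> GI"
    have xc: "x \<in> carrier_mat 7 7" using x by simp
    have "Vv * (x * gM a) = (Vv * x) * gM a"
      using assoc_mult_mat[OF Vv_carrier xc gM_carrier, of a] by simp
    also have "\<dots> = Vv" using x a Vv_gM by simp
    finally show "x * gM a \<in> ?R" using xc by (auto intro: mult_carrier_mat)
  qed
  then show ?thesis by simp
qed

definition R_ok :: "nat \<Rightarrow> bool" where "R_ok i = (iev (wr ! i) = Rl ! i \<and> wf (Rl ! i))"
lemma R_comp: "list_all R_ok [0..<12]" by code_simp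
definition orb_ok :: "nat \<Rightarrow> bool" where "orb_ok i = (imul (rowm vv) (Rl ! i) = rowm (ol ! i))"
lemma orb_comp: "list_all orb_ok [0..<12]" by code_simp
lemma ol_len: "list_all (\<lambda>l. length l = 7) ol" by code_simp
lemma ol_distinct: "distinct ol" by code_simp
lemma ol_length: "length ol = 12" by (simp add: ol_def)

lemma r_Rl: "i < 12 \<Longrightarrow> r i = conv (Rl ! i) \<and> wf (Rl ! i)"
proof -
  assume i: "i < 12"
  have e: "evw (wr ! i) = conv (iev (wr ! i))"
    using evw_iev wr_MI[OF i] MI_lt by blast
  then show ?thesis using R_comp i by (simp add: list_all_iff R_ok_def r_def)
qed

lemma Vv_r: "i < 12 \<Longrightarrow> Vv * r i = conv (rowm (ol ! i))"
proof -
  assume i: "i < 12"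
  have "imul (rowm vv) (Rl ! i) = rowm (ol ! i)" using orb_comp i by (simp add: list_all_iff orb_ok_def)
  then show ?thesis using r_Rl[OF i] conv_imul[OF wf_rowm, of vv "Rl ! i"]
    by (simp add: Vv_def vv_def)
qed

section \<open>Cosets\<close>

definition c :: "nat \<Rightarrow> complex mat set" where "c i = G_L #>\<^bsub>GL7\<^esub> r i"

lemma coset_vec:
  assumes x: "x \<in> carrier GL7" and y: "y \<in> carrier GL7" and e: "G_L #>\<^bsub>GL7\<^esub> x = G_L #>\<^bsub>GL7\<^esub> y"
  shows "Vv * x = Vv * y"
proof -
  have "y \<in> G_L #>\<^bsub>GL7\<^esub> x" using group.repr_independenceD[OF GL7_group G_L_sub y e] .
  then obtain g where g: "g \<in> G_L" "y = g * x" by (auto simp: r_coset_def)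
  have gc: "g \<in> carrier_mat 7 7" using g G_L_carrier GL7_carrier by auto
  have "Vv * y = (Vv * g) * x" using g gc GL7_carrier[OF x] by (simp add: assoc_mult_mat[of _ 7 7 _ 7 _ 7])
  then show ?thesis using Vv_G_L g by simp
qed

lemma c_inj: "i < 12 \<Longrightarrow> j < 12 \<Longrightarrow> c i = c j \<Longrightarrow> i = j"
proof -
  assume i: "i < 12" and j: "j < 12" and e: "c i = c j"
  have "Vv * r i = Vv * r j" using coset_vec[OF r_GL7[OF i] r_GL7[OF j]] e by (simp add: c_def)
  then have "conv (rowm (ol ! i)) = conv (rowm (ol ! j))" using Vv_r i j by simp
  moreover have "length (ol ! i) = 7" "length (ol ! j) = 7" using ol_len ol_length i j by (auto simp: list_all_iff)
  ultimately have "ol ! i = ol ! j" using conv_inj wf_rowm by (metis nth_Cons_0 rowm_def)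
  then show "i = j" using ol_distinct ol_length i j nth_eq_iff_index_eq by metis
qed

lemma c_inj_on: "inj_on c {..<12}" using c_inj by (auto intro: inj_onI)

lemma GL7_cos_assoc:
  "M \<subseteq> carrier GL7 \<Longrightarrow> g \<in> carrier GL7 \<Longrightarrow> h \<in> carrier GL7 \<Longrightarrow>
     (M #>\<^bsub>GL7\<^esub> g) #>\<^bsub>GL7\<^esub> h = M #>\<^bsub>GL7\<^esub> (g * h)"
  using group.coset_mult_assoc[OF GL7_group] by simp

lemma G_L_cos_const: "g \<in> G_L \<Longrightarrow> G_L #>\<^bsub>GL7\<^esub> g = G_L"
  using subgroup.rcos_const[OF G_L_sub GL7_group] by blast

definition cert_ok :: "nat \<Rightarrow> nat \<Rightarrow> bool" where
  "cert_ok i a = (imul (Rl ! i) (ig a) = imul (iev (hl ! i ! a)) (Rl ! (pl ! a ! i)) \<and> set (hl ! i ! a) \<subseteq> GI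
     \<and> pl ! a ! i < 12)"
definition cert_row :: "nat \<Rightarrow> bool" where "cert_row i = list_all (cert_ok i) [0..<6]"
lemma cert_comp: "list_all cert_row [0..<12]" by code_simp
lemma cert: "i < 12 \<Longrightarrow> a < 6 \<Longrightarrow> cert_ok i a"
  using cert_comp by (simp add: list_all_iff cert_row_def)
lemma pl_lt: "a < 6 \<Longrightarrow> i < 12 \<Longrightarrow> pl ! a ! i < 12"
  using cert by (simp add: cert_ok_def)

lemma c_gM: "i < 12 \<Longrightarrow> a < 6 \<Longrightarrow> c i #>\<^bsub>GL7\<^esub> gM a = c (pl ! a ! i)"
proof -
  assume i: "i < 12" and a: "a < 6"
  let ?j = "pl ! a ! i" and ?h = "hl ! i ! a"
  have j: "?j < 12" using pl_lt a i .
  have h: "set ?h \<subseteq> GI" using cert[OF i a] by (simp add: cert_ok_def)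
  have hw: "evw ?h = conv (iev ?h) \<and> wf (iev ?h)" using evw_iev h GI_MI MI_lt by blast
  have ce: "imul (Rl ! i) (ig a) = imul (iev ?h) (Rl ! ?j)" using cert[OF i a] by (simp add: cert_ok_def)
  have eq: "r i * gM a = evw ?h * r ?j"
    using conv_imul[of "Rl ! i" "ig a"] conv_imul[of "iev ?h" "Rl ! ?j"] r_Rl[OF i] r_Rl[OF j] wf_ig[OF a] hw ce
    by (simp add: gM_def)
  have hG: "evw ?h \<in> G_L" using evw_G_L h .
  have "c i #>\<^bsub>GL7\<^esub> gM a = G_L #>\<^bsub>GL7\<^esub> (r i * gM a)"
    unfolding c_def using GL7_cos_assoc[OF G_L_carrier r_GL7[OF i] gM_GL7(1)[OF a]] .
  also have "\<dots> = (G_L #>\<^bsub>GL7\<^esub> evw ?h) #>\<^bsub>GL7\<^esub> r ?j"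
    unfolding eq using GL7_cos_assoc[OF G_L_carrier _ r_GL7[OF j], of "evw ?h"] hG G_L_carrier by auto
  also have "\<dots> = c ?j" using G_L_cos_const[OF hG] by (simp add: c_def)
  finally show ?thesis .
qed

lemma c_carrier: "i < 12 \<Longrightarrow> c i \<subseteq> carrier GL7"
  unfolding c_def using monoid.r_coset_subset_G[OF group.is_monoid[OF GL7_group] G_L_carrier r_GL7] by blast

lemma r0: "r 0 = 1\<^sub>m 7" by (simp add: r_def wr_def)
lemma c0: "c 0 = G_L"
  unfolding c_def r0 using group.coset_mult_one[OF GL7_group G_L_carrier] by simp

lemma M_L_cover: "m \<in> M_L \<Longrightarrow> \<exists>i<12. m \<in> c i"
proof -
  assume m: "m \<in> M_L"
  let ?R = "\<Union>i<12. c i"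
  have "m \<in> ?R"
  proof (rule gen_right_induct1[OF m[unfolded M_L_gen] order_refl])
    show "?R \<subseteq> carrier_mat 7 7" using c_carrier GL7_carrier by blast
    have "1\<^sub>m 7 \<in> G_L" using subgroup.one_closed[OF G_L_sub] by simp
    then show "1\<^sub>m 7 \<in> ?R" using c0 by auto
    fix x a assume x: "x \<in> ?R" and a: "a \<in> MI"
    then obtain i where i: "i < 12" "x \<in> c i" by auto
    have "x * gM a \<in> c i #>\<^bsub>GL7\<^esub> gM a" using i(2) by (auto simp: r_coset_def)
    then have "x * gM a \<in> c (pl ! a ! i)" using c_gM i MI_lt a by simp
    then show "x * gM a \<in> ?R" using pl_lt i MI_lt a by auto
  qed
  then show ?thesis by auto
qed

lemma cosets_c: "cosets_L = c ` {..<12}"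
proof
  show "cosets_L \<subseteq> c ` {..<12}"
  proof
    fix C assume "C \<in> cosets_L"
    then obtain m where m: "m \<in> M_L" "C = G_L #>\<^bsub>GL7\<^esub> m" by (auto simp: cosets_L_def)
    then obtain i where i: "i < 12" "m \<in> c i" using M_L_cover by blast
    then have "c i = G_L #>\<^bsub>GL7\<^esub> m"
      unfolding c_def using group.repr_independence[OF GL7_group _ r_GL7 G_L_sub] by blast
    then show "C \<in> c ` {..<12}" using i m by auto
  qed
next
  show "c ` {..<12} \<subseteq> cosets_L" using r_M_L by (auto simp: cosets_L_def c_def)
qed

lemma card_cosets: "card cosets_L = 12"
  unfolding cosets_c using card_image[OF c_inj_on] by simp




section \<open>Words acting on cosets\<close>

fun appw :: "nat list \<Rightarrow> nat \<Rightarrow> nat" where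
  "appw [] j = j" | "appw (a#ws) j = appw ws (pl ! a ! j)"

lemma appw_lt: "set ws \<subseteq> MI \<Longrightarrow> j < 12 \<Longrightarrow> appw ws j < 12"
  by (induction ws arbitrary: j) (auto simp: MI_iff pl_lt)

lemma evw_GL7: "set ws \<subseteq> MI \<Longrightarrow> evw ws \<in> carrier GL7"
  using evw_M_L M_L_carrier by blast

lemma c_word: "set ws \<subseteq> MI \<Longrightarrow> j < 12 \<Longrightarrow> c j #>\<^bsub>GL7\<^esub> evw ws = c (appw ws j)"
proof (induction ws arbitrary: j)
  case Nil
  then show ?case using group.coset_mult_one[OF GL7_group c_carrier] by simp
next
  case (Cons a ws)
  have a: "a < 6" using Cons by (simp add: MI_iff)
  have ws: "set ws \<subseteq> MI" using Cons by simp
  have "c j #>\<^bsub>GL7\<^esub> evw (a # ws) = (c j #>\<^bsub>GL7\<^esub> gM a) #>\<^bsub>GL7\<^esub> evw ws"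
    using GL7_cos_assoc[OF c_carrier[OF Cons.prems(2)] gM_GL7(1)[OF a] evw_GL7[OF ws]] by simp
  also have "\<dots> = c (pl ! a ! j) #>\<^bsub>GL7\<^esub> evw ws" using c_gM Cons.prems a by simp
  also have "\<dots> = c (appw ws (pl ! a ! j))" using Cons.IH[OF ws pl_lt[OF a Cons.prems(2)]] .
  finally show ?case by simp
qed

lemma c_r: "i < 12 \<Longrightarrow> j < 12 \<Longrightarrow> c j #>\<^bsub>GL7\<^esub> r i = c (appw (wr ! i) j)"
  unfolding r_def using c_word wr_MI by blast

section \<open>Faithfulness\<close>

lemma conv_mult_entry:
  assumes X: "X \<in> carrier_mat 7 7" and k: "k < 7" and j: "j < 7"
  shows "(conv A * X) $$ (k, j) = (\<Sum>m<7. of_int (A!k!m) * X $$ (m, j))"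
  using X k j by (simp add: conv_def scalar_prod_def atLeast0LessThan)

definition Vm :: "int list list" where "Vm = take 7 ol"
definition adjl :: "int list list" where "adjl = [[-1,-1,-1,-1,-1,2,1],[-1,-1,-1,-1,1,0,1],[-1,-1,-1,1,-1,0,1],[-1,-1,-1,1,1,0,-1],[0,-2,-2,0,0,0,0],[-2,0,-2,0,0,0,0],[-2,-2,0,0,0,0,0]]"

lemma wf_Vm: "wf Vm" by code_simp
lemma wf_adj: "wf adjl" by code_simp
definition D4 :: "int list list" where
  "D4 = [[4,0,0,0,0,0,0],[0,4,0,0,0,0,0],[0,0,4,0,0,0,0],[0,0,0,4,0,0,0],[0,0,0,0,4,0,0],[0,0,0,0,0,4,0],[0,0,0,0,0,0,4]]"
lemma adj_comp: "imul adjl Vm = D4" by code_simp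

lemma conv_D4: "conv D4 = 4 \<cdot>\<^sub>m 1\<^sub>m 7"
  by (rule eq_matI) (auto simp: conv_def D4_def less_Suc_eq numeral_eq_Suc)

lemma faithful:
  assumes x: "x \<in> carrier GL7" and y: "y \<in> carrier GL7"
    and e: "\<And>i. i < 12 \<Longrightarrow> c i #>\<^bsub>GL7\<^esub> x = c i #>\<^bsub>GL7\<^esub> y"
  shows "x = y"
proof -
  have xc: "x \<in> carrier_mat 7 7" and yc: "y \<in> carrier_mat 7 7" using x y GL7_carrier by auto
  have row: "conv (rowm (ol ! i)) * x = conv (rowm (ol ! i)) * y" if i: "i < 12" for i
  proof -
    have rx: "r i * x \<in> carrier GL7" using monoid.m_closed[OF group.is_monoid[OF GL7_group] r_GL7[OF i] x] by simp
    have ry: "r i * y \<in> carrier GL7" using monoid.m_closed[OF group.is_monoid[OF GL7_group] r_GL7[OF i] y] by simp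
    have "G_L #>\<^bsub>GL7\<^esub> (r i * x) = G_L #>\<^bsub>GL7\<^esub> (r i * y)"
      using e[OF i] GL7_cos_assoc[OF G_L_carrier r_GL7[OF i] x] GL7_cos_assoc[OF G_L_carrier r_GL7[OF i] y]
      by (simp add: c_def)
    then have "Vv * (r i * x) = Vv * (r i * y)" using coset_vec[OF rx ry] by simp
    moreover have "r i \<in> carrier_mat 7 7" using r_GL7[OF i] GL7_carrier by auto
    ultimately have "(Vv * r i) * x = (Vv * r i) * y"
      using xc yc by (simp add: assoc_mult_mat[of _ 7 7 _ 7 _ 7])
    then show ?thesis using Vv_r[OF i] by simp
  qed
  have V: "conv Vm * x = conv Vm * y"
  proof (rule eq_matI)
    fix k j assume k: "k < dim_row (conv Vm * y)" and j: "j < dim_col (conv Vm * y)"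
    then have k7: "k < 7" and j7: "j < 7" using yc by (auto simp: conv_def)
    have vk: "Vm ! k = ol ! k" using k7 by (simp add: Vm_def)
    have "(conv (rowm (ol ! k)) * x) $$ (0, j) = (conv (rowm (ol ! k)) * y) $$ (0, j)"
      using row[of k] k7 by simp
    then show "(conv Vm * x) $$ (k, j) = (conv Vm * y) $$ (k, j)"
      using conv_mult_entry[OF xc k7 j7] conv_mult_entry[OF yc k7 j7]
        conv_mult_entry[OF xc _ j7, of 0] conv_mult_entry[OF yc _ j7, of 0] vk
      by (simp add: rowm_def)
  qed (use xc yc in auto)
  have "conv adjl * (conv Vm * x) = conv adjl * (conv Vm * y)" using V by simp
  then have "(conv adjl * conv Vm) * x = (conv adjl * conv Vm) * y"
    using xc yc by (simp add: assoc_mult_mat[of _ 7 7 _ 7 _ 7])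
  then have "(4 \<cdot>\<^sub>m 1\<^sub>m 7) * x = (4 \<cdot>\<^sub>m 1\<^sub>m 7) * y"
    using conv_imul[OF wf_adj wf_Vm] adj_comp conv_D4 by simp
  then have e4: "4 \<cdot>\<^sub>m x = 4 \<cdot>\<^sub>m (y :: complex mat)"
    using xc yc by (simp add: mult_smult_assoc_mat[of _ 7 7 _ 7])
  show "x = y"
  proof (rule eq_matI)
    fix i j assume "i < dim_row y" "j < dim_col y"
    then have "(4 \<cdot>\<^sub>m x) $$ (i,j) = (4 \<cdot>\<^sub>m y) $$ (i,j)" using e4 by simp
    then show "x $$ (i, j) = y $$ (i, j)" using \<open>i < dim_row y\<close> \<open>j < dim_col y\<close> xc yc by simp
  qed (use xc yc in auto)
qed

section \<open>The central element\<close>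

definition ww :: "nat list" where "ww = [0,1,3,4,5,1,0,4,3,5,1,4,5,1,0,4,3,5,1,4,5,1,4,5]"
definition Wl :: "int list list" where "Wl = [[-2,-1,-1,-1,1,1,1],[-1,-2,-1,-1,1,1,1],[-1,-1,-2,-1,1,1,1],[-1,-1,-1,-2,1,1,1],[-2,-2,-2,-2,1,2,2],[-2,-2,-2,-2,2,1,2],[-2,-2,-2,-2,2,2,1]]"
definition Wm :: "complex mat" where "Wm = evw ww"

lemma ww_MI: "set ww \<subseteq> MI" by (simp add: ww_def MI_def)
lemma Wl_comp: "iev ww = Wl \<and> wf Wl" by code_simp
lemma Wm_Wl: "Wm = conv Wl"
proof -
  have "set ww \<subseteq> {..<6}" using ww_MI MI_lt by auto
  then show ?thesis using evw_iev[of ww] Wl_comp by (simp add: Wm_def)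
qed
lemma gM_M_L: "a < 6 \<Longrightarrow> gM a \<in> M_L"
  unfolding M_L_gen by (rule generate.incl) (auto simp: MI_iff)
lemma Wm_M_L: "Wm \<in> M_L" unfolding Wm_def using evw_M_L ww_MI .
lemma Wm_GL7: "Wm \<in> carrier GL7" using Wm_M_L M_L_carrier by auto
lemma Wm_carrier: "Wm \<in> carrier_mat 7 7" by (simp add: Wm_Wl)
lemma Wl_ne: "Wl \<noteq> iI" by (simp add: Wl_def iI_def)
lemma Wm_ne: "Wm \<noteq> 1\<^sub>m 7"
  using conv_inj[OF _ wf_iI] Wl_comp Wl_ne conv_iI Wm_Wl by auto

definition comm_ok :: "nat \<Rightarrow> bool" where "comm_ok a = (imul Wl (ig a) = imul (ig a) Wl)"
lemma comm_comp: "list_all comm_ok [0..<6]" by code_simp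

lemma Wm_gM: "a < 6 \<Longrightarrow> Wm * gM a = gM a * Wm"
  using comm_comp conv_imul[OF _ wf_ig, of Wl a] conv_imul[OF wf_ig _, of a Wl] Wl_comp
  by (auto simp: list_all_iff comm_ok_def Wm_Wl gM_def)

lemma Wm_central: "m \<in> M_L \<Longrightarrow> Wm * m = m * Wm"
proof -
  assume m: "m \<in> M_L"
  let ?R = "{x \<in> carrier_mat 7 7. Wm * x = x * Wm}"
  have "m \<in> ?R"
  proof (rule gen_right_induct1[OF m[unfolded M_L_gen] order_refl])
    show "?R \<subseteq> carrier_mat 7 7" by auto
    show "1\<^sub>m 7 \<in> ?R" using Wm_carrier by simp
    fix x a assume x: "x \<in> ?R" and a: "a \<in> MI"
    have xc: "x \<in> carrier_mat 7 7" using x by simp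
    have a6: "a < 6" using a MI_lt by simp
    have "Wm * (x * gM a) = (Wm * x) * gM a"
      using assoc_mult_mat[OF Wm_carrier xc gM_carrier, of a] by simp
    also have "\<dots> = (x * Wm) * gM a" using x by simp
    also have "\<dots> = x * (Wm * gM a)" using assoc_mult_mat[OF xc Wm_carrier gM_carrier, of a] by simp
    also have "\<dots> = x * (gM a * Wm)" using Wm_gM[OF a6] by simp
    also have "\<dots> = (x * gM a) * Wm" using assoc_mult_mat[OF xc gM_carrier Wm_carrier, of a] by simp
    finally show "x * gM a \<in> ?R" using xc by (auto intro: mult_carrier_mat)
  qed
  then show ?thesis by simp
qed

lemma central_action:
  assumes w: "w \<in> M_L" and cen: "\<And>m. m \<in> M_L \<Longrightarrow> w * m = m * w"
    and j: "j < 12" and wj: "G_L #>\<^bsub>GL7\<^esub> w = c j" and i: "i < 12"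
  shows "c i #>\<^bsub>GL7\<^esub> w = c (appw (wr ! i) j)"
proof -
  have wG: "w \<in> carrier GL7" using w M_L_carrier by auto
  have "c i #>\<^bsub>GL7\<^esub> w = G_L #>\<^bsub>GL7\<^esub> (r i * w)"
    unfolding c_def using GL7_cos_assoc[OF G_L_carrier r_GL7[OF i] wG] by simp
  also have "\<dots> = G_L #>\<^bsub>GL7\<^esub> (w * r i)" using cen[OF r_M_L[OF i]] by simp
  also have "\<dots> = c j #>\<^bsub>GL7\<^esub> r i"
    using GL7_cos_assoc[OF G_L_carrier wG r_GL7[OF i]] wj by simp
  also have "\<dots> = c (appw (wr ! i) j)" using c_r[OF i j] .
  finally show ?thesis .
qed

definition cons_ok :: "nat \<Rightarrow> nat \<Rightarrow> nat \<Rightarrow> bool" where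
  "cons_ok j i a = (pl ! a ! (appw (wr ! i) j) = appw (wr ! (pl ! a ! i)) j)"
definition cons_row :: "nat \<Rightarrow> nat \<Rightarrow> bool" where "cons_row j i = list_all (cons_ok j i) [0..<6]"
definition consist :: "nat \<Rightarrow> bool" where "consist j = list_all (cons_row j) [0..<12]"
definition cand_ok :: "nat \<Rightarrow> bool" where "cand_ok j = (consist j \<longrightarrow> j = 0 \<or> j = 11)"
lemma cand_comp: "list_all cand_ok [0..<12]" by code_simp
definition id_ok :: "nat \<Rightarrow> bool" where "id_ok i = (appw (wr ! i) 0 = i)"
lemma id_comp: "list_all id_ok [0..<12]" by code_simp
lemma ww_comp: "appw ww 0 = 11" by code_simp

lemma GW: "G_L #>\<^bsub>GL7\<^esub> Wm = c 11"
  using c_word[OF ww_MI, of 0] ww_comp c0 by (simp add: Wm_def)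

lemma Wm_action: "i < 12 \<Longrightarrow> c i #>\<^bsub>GL7\<^esub> Wm = c (appw (wr ! i) 11)"
  using central_action[OF Wm_M_L Wm_central _ GW] by simp

lemma central_unique:
  assumes w: "w \<in> M_L" and cen: "\<And>m. m \<in> M_L \<Longrightarrow> w * m = m * w" and ne: "w \<noteq> 1\<^sub>m 7"
  shows "w = Wm"
proof -
  have wG: "w \<in> carrier GL7" using w M_L_carrier by auto
  have "G_L #>\<^bsub>GL7\<^esub> w \<in> cosets_L" using w by (auto simp: cosets_L_def)
  then obtain j where j: "j < 12" "G_L #>\<^bsub>GL7\<^esub> w = c j" using cosets_c by auto
  have act: "\<And>i. i < 12 \<Longrightarrow> c i #>\<^bsub>GL7\<^esub> w = c (appw (wr ! i) j)"
    using central_action[OF w cen j] by blast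
  have pw_lt: "\<And>i. i < 12 \<Longrightarrow> appw (wr ! i) j < 12" using appw_lt wr_MI j by blast
  have "cons_ok j i a" if i: "i < 12" and a: "a < 6" for i a
  proof -
    have "c i #>\<^bsub>GL7\<^esub> (w * gM a) = c i #>\<^bsub>GL7\<^esub> (gM a * w)" using cen[OF gM_M_L[OF a]] by simp
    moreover have "c i #>\<^bsub>GL7\<^esub> (w * gM a) = c (pl ! a ! (appw (wr ! i) j))"
      using GL7_cos_assoc[OF c_carrier[OF i] wG gM_GL7(1)[OF a]] act[OF i] c_gM[OF pw_lt[OF i] a] by simp
    moreover have "c i #>\<^bsub>GL7\<^esub> (gM a * w) = c (appw (wr ! (pl ! a ! i)) j)"
      using GL7_cos_assoc[OF c_carrier[OF i] gM_GL7(1)[OF a] wG] act[OF pl_lt[OF a i]] c_gM[OF i a] by simp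
    ultimately show ?thesis using c_inj pl_lt pw_lt a i by (simp add: cons_ok_def)
  qed
  then have "consist j" by (simp add: consist_def cons_row_def list_all_iff)
  then have j011: "j = 0 \<or> j = 11" using cand_comp j by (simp add: list_all_iff cand_ok_def)
  show ?thesis
  proof (cases "j = 0")
    case True
    have "w = 1\<^sub>m 7"
    proof (rule faithful[OF wG])
      show "1\<^sub>m 7 \<in> carrier GL7" using monoid.one_closed[OF group.is_monoid[OF GL7_group]] by simp
      fix i :: nat assume i: "i < 12"
      have "appw (wr ! i) 0 = i" using id_comp i by (simp add: list_all_iff id_ok_def)
      then show "c i #>\<^bsub>GL7\<^esub> w = c i #>\<^bsub>GL7\<^esub> 1\<^sub>m 7"
        using act[OF i] True group.coset_mult_one[OF GL7_group c_carrier[OF i]] by simp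
    qed
    then show ?thesis using ne by simp
  next
    case False
    then have "j = 11" using j011 by simp
    then show ?thesis using faithful[OF wG Wm_GL7] act Wm_action by simp
  qed
qed

lemma w0_Wm: "w0 = Wm"
  unfolding w0_def
proof (rule the_equality)
  show "Wm \<in> M_L \<and> Wm \<noteq> \<one>\<^bsub>GL7\<^esub> \<and> (\<forall>m\<in>M_L. Wm \<otimes>\<^bsub>GL7\<^esub> m = m \<otimes>\<^bsub>GL7\<^esub> Wm)"
    using Wm_M_L Wm_ne Wm_central by simp
  fix w assume "w \<in> M_L \<and> w \<noteq> \<one>\<^bsub>GL7\<^esub> \<and> (\<forall>m\<in>M_L. w \<otimes>\<^bsub>GL7\<^esub> m = m \<otimes>\<^bsub>GL7\<^esub> w)"
  then show "w = Wm" using central_unique by simp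
qed




definition q :: "nat \<Rightarrow> nat" where "q i = appw (wr ! i) 11"

lemma q_lt: "i < 12 \<Longrightarrow> q i < 12" unfolding q_def using appw_lt wr_MI by simp

definition qok :: "nat \<Rightarrow> bool" where "qok i = (q i = 11 - i)"
lemma q_comp: "list_all qok [0..<12]" by code_simp
lemma q_eq: "i < 12 \<Longrightarrow> q i = 11 - i" using q_comp by (simp add: list_all_iff qok_def)

lemma cact_w0: "i < 12 \<Longrightarrow> cact (c i) w0 = c (q i)"
  using Wm_action by (simp add: cact_def w0_Wm q_def)

lemma cosets_carrier: "C \<in> cosets_L \<Longrightarrow> C \<subseteq> carrier GL7"
  using cosets_c c_carrier by auto

lemma cact_in: "C \<in> cosets_L \<Longrightarrow> m \<in> M_L \<Longrightarrow> cact C m \<in> cosets_L"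
proof -
  assume C: "C \<in> cosets_L" and m: "m \<in> M_L"
  then obtain n where n: "n \<in> M_L" "C = G_L #>\<^bsub>GL7\<^esub> n" by (auto simp: cosets_L_def)
  have "cact C m = G_L #>\<^bsub>GL7\<^esub> (n * m)"
    unfolding cact_def n(2) using GL7_cos_assoc[OF G_L_carrier] n m M_L_carrier by auto
  moreover have "n * m \<in> M_L" using subgroup.m_closed[OF M_L_sub n(1) m] by simp
  ultimately show ?thesis by (auto simp: cosets_L_def)
qed

lemma cact_assoc: "C \<in> cosets_L \<Longrightarrow> x \<in> carrier GL7 \<Longrightarrow> y \<in> carrier GL7 \<Longrightarrow>
    cact (cact C x) y = cact C (x * y)"
  unfolding cact_def using GL7_cos_assoc cosets_carrier by blast

lemma cact_one: "C \<in> cosets_L \<Longrightarrow> cact C (1\<^sub>m 7) = C"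
  unfolding cact_def using group.coset_mult_one[OF GL7_group cosets_carrier] by simp

lemma cact_inj: "C \<in> cosets_L \<Longrightarrow> D \<in> cosets_L \<Longrightarrow> m \<in> M_L \<Longrightarrow> cact C m = cact D m \<Longrightarrow> C = D"
proof -
  assume C: "C \<in> cosets_L" and D: "D \<in> cosets_L" and m: "m \<in> M_L" and e: "cact C m = cact D m"
  have mG: "m \<in> carrier GL7" using m M_L_carrier by auto
  have iG: "inv\<^bsub>GL7\<^esub> m \<in> carrier GL7" using group.inv_closed[OF GL7_group mG] .
  have mi: "m * inv\<^bsub>GL7\<^esub> m = 1\<^sub>m 7" using group.r_inv[OF GL7_group mG] by simp
  have "C = cact (cact C m) (inv\<^bsub>GL7\<^esub> m)" using cact_assoc[OF C mG iG] mi cact_one[OF C] by simp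
  also have "\<dots> = cact (cact D m) (inv\<^bsub>GL7\<^esub> m)" using e by simp
  also have "\<dots> = D" using cact_assoc[OF D mG iG] mi cact_one[OF D] by simp
  finally show ?thesis .
qed

lemma w0_M_L: "w0 \<in> M_L" using Wm_M_L w0_Wm by simp
lemma w0_central: "m \<in> M_L \<Longrightarrow> w0 * m = m * w0" using Wm_central w0_Wm by simp

lemma cact_w0_comm: "C \<in> cosets_L \<Longrightarrow> m \<in> M_L \<Longrightarrow> cact (cact C m) w0 = cact (cact C w0) m"
proof -
  assume C: "C \<in> cosets_L" and m: "m \<in> M_L"
  have mG: "m \<in> carrier GL7" and wG: "w0 \<in> carrier GL7" using m w0_M_L M_L_carrier by auto
  show ?thesis using cact_assoc[OF C mG wG] cact_assoc[OF C wG mG] w0_central[OF m] by simp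
qed

lemma triples_carrier: "S \<in> triples_L \<Longrightarrow> S \<subseteq> cosets_L" by (simp add: triples_L_def)

lemma inv_triple:
  assumes S: "S \<in> triples_L" and m: "m \<in> M_L"
  shows "sact S m \<in> triples_L \<and> (L_coherent (sact S m) \<longleftrightarrow> L_coherent S)"
proof -
  let ?f = "\<lambda>C. cact C m"
  have Sc: "S \<subseteq> cosets_L" using S by (simp add: triples_L_def)
  have inj: "inj_on ?f cosets_L" unfolding inj_on_def using cact_inj[OF _ _ m] by blast
  have injS: "inj_on ?f S" using inj_on_subset[OF inj Sc] .
  have "card (sact S m) = 3" using card_image[OF injS] S by (simp add: sact_def triples_L_def)
  moreover have "sact S m \<subseteq> cosets_L" using cact_in[OF _ m] Sc by (auto simp: sact_def)
  ultimately have T: "sact S m \<in> triples_L" by (simp add: triples_L_def)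
  have w0S: "\<And>C. C \<in> S \<Longrightarrow> cact C w0 \<in> cosets_L" using cact_in[OF _ w0_M_L] Sc by auto
  have "L_coherent (sact S m) \<longleftrightarrow> L_coherent S"
    unfolding L_coherent_def sact_def
  proof (rule iffI; erule contrapos_nn)
    assume "\<exists>i\<in>S. \<exists>j\<in>S. i \<noteq> j \<and> cact i w0 = j \<and> cact j w0 = i"
    then obtain i j where ij: "i \<in> S" "j \<in> S" "i \<noteq> j" "cact i w0 = j" "cact j w0 = i" by blast
    have "?f i \<noteq> ?f j" using ij inj_onD[OF injS] by blast
    moreover have "cact (?f i) w0 = ?f j" "cact (?f j) w0 = ?f i"
      using cact_w0_comm[OF _ m] ij Sc by auto
    ultimately show "\<exists>i\<in>?f ` S. \<exists>j\<in>?f ` S. i \<noteq> j \<and> cact i w0 = j \<and> cact j w0 = i"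
      using ij by blast
  next
    assume "\<exists>i\<in>?f ` S. \<exists>j\<in>?f ` S. i \<noteq> j \<and> cact i w0 = j \<and> cact j w0 = i"
    then obtain i j where ij: "i \<in> S" "j \<in> S" "?f i \<noteq> ?f j" "cact (?f i) w0 = ?f j" "cact (?f j) w0 = ?f i"
      by blast
    have e1: "?f (cact i w0) = ?f j" using ij cact_w0_comm[OF _ m] Sc by auto
    have e2: "?f (cact j w0) = ?f i" using ij cact_w0_comm[OF _ m] Sc by auto
    have ic: "i \<in> cosets_L" "j \<in> cosets_L" using ij Sc by auto
    have "cact i w0 = j" using inj_onD[OF inj e1 w0S[OF ij(1)] ic(2)] .
    moreover have "cact j w0 = i" using inj_onD[OF inj e2 w0S[OF ij(2)] ic(1)] .
    ultimately have "cact i w0 = j" "cact j w0 = i" by auto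
    moreover have "i \<noteq> j" using ij by blast
    ultimately show "\<exists>i\<in>S. \<exists>j\<in>S. i \<noteq> j \<and> cact i w0 = j \<and> cact j w0 = i" using ij by blast
  qed
  then show ?thesis using T by simp
qed

section \<open>Index triples\<close>

definition coh :: "nat set \<Rightarrow> bool" where
  "coh I \<longleftrightarrow> \<not> (\<exists>i\<in>I. \<exists>j\<in>I. i \<noteq> j \<and> q i = j \<and> q j = i)"

lemma coh_c: "I \<subseteq> {..<12} \<Longrightarrow> L_coherent (c ` I) \<longleftrightarrow> coh I"
proof -
  assume I: "I \<subseteq> {..<12}"
  have "(\<exists>C\<in>c ` I. \<exists>D\<in>c ` I. C \<noteq> D \<and> cact C w0 = D \<and> cact D w0 = C) \<longleftrightarrow>
        (\<exists>i\<in>I. \<exists>j\<in>I. i \<noteq> j \<and> q i = j \<and> q j = i)"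
  proof
    assume "\<exists>C\<in>c ` I. \<exists>D\<in>c ` I. C \<noteq> D \<and> cact C w0 = D \<and> cact D w0 = C"
    then obtain i j where ij: "i \<in> I" "j \<in> I" "c i \<noteq> c j" "cact (c i) w0 = c j" "cact (c j) w0 = c i" by blast
    have i: "i < 12" and j: "j < 12" using ij I by auto
    have "c (q i) = c j" using ij cact_w0[OF i] by simp
    then have qi: "q i = j" using c_inj q_lt[OF i] j by blast
    have "c (q j) = c i" using ij cact_w0[OF j] by simp
    then have qj: "q j = i" using c_inj q_lt[OF j] i by blast
    have "i \<noteq> j" using ij by blast
    then show "\<exists>i\<in>I. \<exists>j\<in>I. i \<noteq> j \<and> q i = j \<and> q j = i" using ij qi qj by blast
  next
    assume "\<exists>i\<in>I. \<exists>j\<in>I. i \<noteq> j \<and> q i = j \<and> q j = i"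
    then obtain i j where ij: "i \<in> I" "j \<in> I" "i \<noteq> j" "q i = j" "q j = i" by blast
    have i: "i < 12" and j: "j < 12" using ij I by auto
    have "c i \<noteq> c j" using c_inj i j ij(3) by blast
    moreover have "cact (c i) w0 = c j" "cact (c j) w0 = c i" using cact_w0[OF i] cact_w0[OF j] ij by auto
    ultimately show "\<exists>C\<in>c ` I. \<exists>D\<in>c ` I. C \<noteq> D \<and> cact C w0 = D \<and> cact D w0 = C"
      using ij by blast
  qed
  then show ?thesis by (simp add: L_coherent_def coh_def)
qed

lemma coh_sum: "I \<subseteq> {..<12} \<Longrightarrow> coh I \<longleftrightarrow> \<not> (\<exists>i\<in>I. \<exists>j\<in>I. i + j = 11)"
proof -
  assume I: "I \<subseteq> {..<12}"
  have ar: "\<And>i j::nat. (i \<noteq> j \<and> 11 - i = j \<and> 11 - j = i) \<longleftrightarrow> i + j = 11" by presburger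
  have "\<forall>i\<in>I. \<forall>j\<in>I. (i \<noteq> j \<and> q i = j \<and> q j = i) \<longleftrightarrow> i + j = 11"
    using q_eq I ar by auto
  then show ?thesis unfolding coh_def by blast
qed

definition TI :: "nat set set" where "TI = {I. I \<subseteq> {..<12} \<and> card I = 3}"

lemma inj_cimg: "inj_on (\<lambda>I. c ` I) (Pow {..<12})"
  using inj_on_image_Pow[OF c_inj_on] .

lemma triples_idx: "triples_L = (\<lambda>I. c ` I) ` TI"
proof
  show "triples_L \<subseteq> (\<lambda>I. c ` I) ` TI"
  proof
    fix S assume S: "S \<in> triples_L"
    then have "S \<subseteq> c ` {..<12}" using cosets_c by (simp add: triples_L_def)
    then obtain I where I: "I \<subseteq> {..<12}" "S = c ` I" by (auto simp: subset_image_iff)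
    have "card I = 3" using S I card_image[OF inj_on_subset[OF c_inj_on I(1)]] by (simp add: triples_L_def)
    then show "S \<in> (\<lambda>I. c ` I) ` TI" using I by (auto simp: TI_def)
  qed
next
  show "(\<lambda>I. c ` I) ` TI \<subseteq> triples_L"
  proof
    fix S assume "S \<in> (\<lambda>I. c ` I) ` TI"
    then obtain I where I: "I \<subseteq> {..<12}" "card I = 3" "S = c ` I" by (auto simp: TI_def)
    have "card S = 3" using card_image[OF inj_on_subset[OF c_inj_on I(1)]] I by simp
    moreover have "S \<subseteq> cosets_L" using I cosets_c by auto
    ultimately show "S \<in> triples_L" by (simp add: triples_L_def)
  qed
qed

definition allT :: "nat list list" where
  "allT = concat (map (\<lambda>i. concat (map (\<lambda>j. map (\<lambda>k. [i,j,k]) [Suc j..<12]) [Suc i..<12])) [0..<12])"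

lemma allT_mem: "[a,b,d] \<in> set allT \<longleftrightarrow> a < b \<and> b < d \<and> d < 12"
proof
  assume "[a,b,d] \<in> set allT" then show "a < b \<and> b < d \<and> d < 12" by (auto simp: allT_def)
next
  assume h: "a < b \<and> b < d \<and> d < 12"
  show "[a,b,d] \<in> set allT"
    unfolding allT_def apply simp apply (rule bexI[where x=a], rule bexI[where x=b]) using h by auto
qed

definition tri_ok :: "nat list \<Rightarrow> bool" where
  "tri_ok t = (set t \<subseteq> {..<12} \<and> card (set t) = 3 \<and> sorted t \<and> distinct t)"
lemma tri_comp: "list_all tri_ok allT" by code_simp

fun lexl :: "nat list \<Rightarrow> nat list \<Rightarrow> bool" where
  "lexl (a#as) (b#bs) = (a < b \<or> a = b \<and> lexl as bs)" | "lexl _ _ = False"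
fun incr :: "nat list list \<Rightarrow> bool" where
  "incr (x # y # zs) = (lexl x y \<and> incr (y # zs))" | "incr _ = True"
lemma lexl_irrefl: "\<not> lexl x x" by (induction x) auto
lemma lexl_trans: "lexl x y \<Longrightarrow> lexl y z \<Longrightarrow> lexl x z"
proof (induction x arbitrary: y z)
  case Nil then show ?case by simp
next
  case (Cons a as)
  then obtain b bs where y: "y = b # bs" by (cases y) auto
  then obtain d ds where z: "z = d # ds" using Cons.prems(2) by (cases z) auto
  show ?case using Cons y z by auto
qed
lemma incr_sw: "incr xs \<Longrightarrow> sorted_wrt lexl xs"
proof (induction xs rule: incr.induct)
  case (1 x y zs)
  then have h: "lexl x y" "sorted_wrt lexl (y # zs)" by auto
  then have "\<forall>z\<in>set zs. lexl x z" using lexl_trans by auto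
  then show ?case using h by auto
qed auto
lemma sw_distinct: "sorted_wrt lexl xs \<Longrightarrow> distinct xs"
  by (induction xs) (auto simp: lexl_irrefl)
lemma key_comp: "incr allT" by code_simp
lemma allT_distinct: "distinct allT"
  using sw_distinct[OF incr_sw[OF key_comp]] .

lemma TI_allT: "TI = set ` set allT"
proof
  show "set ` set allT \<subseteq> TI" using tri_comp by (auto simp: list_all_iff tri_ok_def TI_def)
next
  show "TI \<subseteq> set ` set allT"
  proof
    fix I assume I: "I \<in> TI"
    let ?t = "sorted_list_of_set I"
    have fin: "finite I" using I by (auto simp: TI_def intro: finite_subset)
    have st: "set ?t = I" using fin by simp
    have len: "length ?t = 3" using I by (simp add: TI_def)
    have ss: "sorted_wrt (<) ?t" by simp
    have abd: "?t = [?t!0, ?t!1, ?t!2]" using len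
      by (intro nth_equalityI) (auto simp: less_Suc_eq numeral_3_eq_3 numeral_2_eq_2 nth_Cons')
    have "?t!0 < ?t!1" "?t!1 < ?t!2" using sorted_wrt_nth_less[OF ss] len by auto
    moreover have "?t!2 < 12" using I st len nth_mem[of 2 ?t] by (auto simp: TI_def)
    ultimately have "?t \<in> set allT" using abd allT_mem by (metis (no_types, lifting))
    then show "I \<in> set ` set allT" using st by force
  qed
qed

definition cohT :: "nat list \<Rightarrow> bool" where "cohT t = (\<not> (\<exists>i\<in>set t. \<exists>j\<in>set t. i + j = 11))"
definition incT :: "nat list \<Rightarrow> bool" where "incT t = (\<exists>i\<in>set t. \<exists>j\<in>set t. i + j = 11)"
definition cohL :: "nat list list" where "cohL = [[0,1,2],[0,1,3],[0,1,4],[0,1,5],[0,1,6],[0,1,7],[0,1,8],[0,1,9],[0,2,3],[0,2,4],[0,2,5],[0,2,6],[0,2,7],[0,2,8],[0,2,10],[0,3,4],[0,3,5],[0,3,6],[0,3,7],[0,3,9],[0,3,10],[0,4,5],[0,4,6],[0,4,8],[0,4,9],[0,4,10],[0,5,7],[0,5,8],[0,5,9],[0,5,10],[0,6,7],[0,6,8],[0,6,9],[0,6,10],[0,7,8],[0,7,9],[0,7,10],[0,8,9],[0,8,10],[0,9,10],[1,2,3],[1,2,4],[1,2,5],[1,2,6],[1,2,7],[1,2,8],[1,2,11],[1,3,4],[1,3,5],[1,3,6],[1,3,7],[1,3,9],[1,3,11],[1,4,5],[1,4,6],[1,4,8],[1,4,9],[1,4,11],[1,5,7],[1,5,8],[1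,5,9],[1,5,11],[1,6,7],[1,6,8],[1,6,9],[1,6,11],[1,7,8],[1,7,9],[1,7,11],[1,8,9],[1,8,11],[1,9,11],[2,3,4],[2,3,5],[2,3,6],[2,3,7],[2,3,10],[2,3,11],[2,4,5],[2,4,6],[2,4,8],[2,4,10],[2,4,11],[2,5,7],[2,5,8],[2,5,10],[2,5,11],[2,6,7],[2,6,8],[2,6,10],[2,6,11],[2,7,8],[2,7,10],[2,7,11],[2,8,10],[2,8,11],[2,10,11],[3,4,5],[3,4,6],[3,4,9],[3,4,10],[3,4,11],[3,5,7],[3,5,9],[3,5,10],[3,5,11],[3,6,7],[3,6,9],[3,6,10],[3,6,11],[3,7,9],[3,7,10],[3,7,11],[3,9,10],[3,9,11],[3,10,11],[4,5,8],[4,5,9],[4,5,10],[4,5,11],[4,6,8],[4,6,9],[4,6,10],[4,6,11],[4,8,9],[4,8,10],[4,8,11],[4,9,10],[4,9,11],[4,10,11],[5,7,8],[5,7,9],[5,7,10],[5,7,11],[5,8,9],[5,8,10],[5,8,11],[5,9,10],[5,9,11],[5,10,11],[6,7,8],[6,7,9],[6,7,10],[6,7,11],[6,8,9],[6,8,10],[6,8,11],[6,9,10],[6,9,11],[6,10,11],[7,8,9],[7,8,10],[7,8,11],[7,9,10],[7,9,11],[7,10,11],[8,9,10],[8,9,11],[8,10,11],[9,10,11]]"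
definition incL :: "nat list list" where "incL = [[0,1,10],[0,1,11],[0,2,9],[0,2,11],[0,3,8],[0,3,11],[0,4,7],[0,4,11],[0,5,6],[0,5,11],[0,6,11],[0,7,11],[0,8,11],[0,9,11],[0,10,11],[1,2,9],[1,2,10],[1,3,8],[1,3,10],[1,4,7],[1,4,10],[1,5,6],[1,5,10],[1,6,10],[1,7,10],[1,8,10],[1,9,10],[1,10,11],[2,3,8],[2,3,9],[2,4,7],[2,4,9],[2,5,6],[2,5,9],[2,6,9],[2,7,9],[2,8,9],[2,9,10],[2,9,11],[3,4,7],[3,4,8],[3,5,6],[3,5,8],[3,6,8],[3,7,8],[3,8,9],[3,8,10],[3,8,11],[4,5,6],[4,5,7],[4,6,7],[4,7,8],[4,7,9],[4,7,10],[4,7,11],[5,6,7],[5,6,8],[5,6,9],[5,6,10],[5,6,11]]"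
lemma cohL_eq: "filter cohT allT = cohL" by code_simp
lemma incL_eq: "filter incT allT = incL" by code_simp

lemma cohL_len: "length (filter cohT allT) = 160" unfolding cohL_eq by (simp add: cohL_def)
lemma incL_len: "length (filter incT allT) = 60" unfolding incL_eq by (simp add: incL_def)

lemma allT_sub: "t \<in> set allT \<Longrightarrow> set t \<subseteq> {..<12}"
  using tri_comp by (auto simp: list_all_iff tri_ok_def)
lemma cohT_coh: "t \<in> set allT \<Longrightarrow> cohT t = coh (set t)"
  using coh_sum[OF allT_sub] by (simp add: cohT_def)
lemma incT_coh: "t \<in> set allT \<Longrightarrow> incT t = (\<not> coh (set t))"
  using coh_sum[OF allT_sub] by (simp add: incT_def)

lemma inj_set_allT: "inj_on set (set allT)"
proof (rule inj_onI)
  fix s t assume s: "s \<in> set allT" and t: "t \<in> set allT" and e: "set s = set t"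
  have "sorted s" "distinct s" "sorted t" "distinct t" using s t tri_comp by (auto simp: list_all_iff tri_ok_def)
  then show "s = t" using e sorted_distinct_set_unique by blast
qed

lemma card_filter_idx:
  fixes P :: "nat list \<Rightarrow> bool"
  assumes that: "\<And>t. t \<in> set allT \<Longrightarrow> P t = P' (set t)"
  shows "card {I \<in> TI. P' I} = length (filter P allT)"
proof -
  have "{I \<in> TI. P' I} = set ` set (filter P allT)" using that by (force simp: TI_allT)
  moreover have "inj_on set (set (filter P allT))" using inj_on_subset[OF inj_set_allT, of "set (filter P allT)"] by auto
  ultimately have "card {I \<in> TI. P' I} = card (set (filter P allT))" by (simp add: card_image)
  also have "\<dots> = length (filter P allT)" using distinct_card distinct_filter allT_distinct by blast
  finally show ?thesis .
qed

lemma card_idx_coh: "card {I \<in> TI. coh I} = 160"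
  using card_filter_idx[of cohT coh] cohL_len cohT_coh by simp
lemma card_idx_inc: "card {I \<in> TI. \<not> coh I} = 60"
  using card_filter_idx[of incT "\<lambda>I. \<not> coh I"] incL_len incT_coh by simp

section \<open>Orbits\<close>

definition ucoh :: "nat list list" where "ucoh = [[],[5],[5,1],[5,1,0],[5,1,2],[5,1,0,2],[5,1,0,2,1],[5,1,0,2,1,5],[5,4],[5,1,4],[5,1,0,4],[5,1,2,4],[5,1,0,2,4],[5,1,0,2,1,4],[5,1,0,2,1,5,4],[5,1,2,4,5],[5,1,0,2,4,5],[5,1,4,5],[5,1,0,4,5],[5,1,0,2,1,4,5],[5,1,0,2,1,4,5,4],[5,1,0,2,4,5,1],[5,1,4,5,1],[5,1,0,4,5,1],[5,1,0,2,1,4,5,1],[5,1,0,2,1,4,5,1,4],[5,1,4,5,1,0],[5,1,0,4,5,1,0],[5,1,0,2,1,4,5,1,0],[5,1,0,2,1,4,5,1,0,4],[5,1,0,2,4,5,1,2],[5,1,0,4,5,1,2],[5,1,0,4,5,1,5],[5,1,0,4,5,1,5,4],[5,1,0,4,5,1,0,2],[5,1,0,4,5,1,0,5],[5,1,0,4,5,1,0,5,4],[5,1,0,4,5,1,0,5,1],[5,1,0,4,5,1,0,5,1,4],[5,1,0,4,5,1,0,5,1,4,5],[5,4,3],[5,1,4,3],[5,1,0,4,3],[5,1,2,4,3],[5,1,0,2,4,3],[5,1,0,2,1,4,3],[5,1,0,2,1,5,4,3],[5,1,2,4,3,5],[5,1,0,2,4,3,5],[5,1,4,3,5],[5,1,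0,4,3,5],[5,1,0,2,1,4,3,5],[5,1,0,2,1,4,5,4,3],[5,1,0,2,4,3,5,1],[5,1,4,3,5,1],[5,1,0,4,3,5,1],[5,1,0,2,1,4,3,5,1],[5,1,0,2,1,4,5,1,4,3],[5,1,4,3,5,1,0],[5,1,0,4,3,5,1,0],[5,1,0,2,1,4,3,5,1,0],[5,1,0,2,1,4,5,1,0,4,3],[5,1,0,2,4,3,5,1,2],[5,1,0,4,3,5,1,2],[5,1,0,4,3,5,1,5],[5,1,0,4,5,1,5,4,3],[5,1,0,4,3,5,1,0,2],[5,1,0,4,3,5,1,0,5],[5,1,0,4,5,1,0,5,4,3],[5,1,0,4,3,5,1,0,5,1],[5,1,0,4,5,1,0,5,1,4,3],[5,1,0,4,5,1,0,5,1,4,3,5],[5,1,2,4,3,5,4],[5,1,0,2,4,3,5,4],[5,1,4,3,5,4],[5,1,0,4,3,5,4],[5,1,0,2,1,4,3,5,4],[5,1,0,2,1,4,3,5,4,3],[5,1,0,2,4,3,5,1,4],[5,1,4,3,5,1,4],[5,1,0,4,3,5,1,4],[5,1,0,2,1,4,3,5,1,4],[5,1,0,2,1,4,3,5,1,4,3],[5,1,4,3,5,1,0,4],[5,1,0,4,3,5,1,0,4],[5,1,0,2,1,4,3,5,1,0,4],[5,1,0,2,1,4,3,5,1,0,4,3],[5,1,0,2,4,3,5,1,2,4],[5,1,0,4,3,5,1,2,4],[5,1,0,4,3,5,1,5,4],[5,1,0,4,3,5,1,5,4,3],[5,1,0,4,3,5,1,0,2,4],[5,1,0,4,3,5,1,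0,5,4],[5,1,0,4,3,5,1,0,5,4,3],[5,1,0,4,3,5,1,0,5,1,4],[5,1,0,4,3,5,1,0,5,1,4,3],[5,1,0,4,5,1,0,5,1,4,3,5,4],[5,1,0,2,4,3,5,1,2,4,5],[5,1,4,3,5,1,4,5],[5,1,0,4,3,5,1,2,4,5],[5,1,0,4,3,5,1,5,4,5],[5,1,0,4,3,5,1,5,4,3,5],[5,1,4,3,5,1,0,4,5],[5,1,0,4,3,5,1,0,2,4,5],[5,1,0,4,3,5,1,0,5,4,5],[5,1,0,4,3,5,1,0,5,4,3,5],[5,1,0,2,4,3,5,1,4,5],[5,1,0,4,3,5,1,4,5],[5,1,0,4,3,5,1,4,5,4],[5,1,0,4,3,5,1,4,5,4,3],[5,1,0,4,3,5,1,0,4,5],[5,1,0,4,3,5,1,0,4,5,4],[5,1,0,4,3,5,1,0,4,5,4,3],[5,1,0,4,3,5,1,0,5,1,4,5],[5,1,0,4,3,5,1,0,5,1,4,3,5],[5,1,0,4,3,5,1,0,5,1,4,3,5,4],[5,1,4,3,5,1,0,4,5,1],[5,1,0,4,3,5,1,0,2,4,5,1],[5,1,0,4,3,5,1,0,5,4,5,1],[5,1,0,4,3,5,1,0,5,4,3,5,1],[5,1,0,2,4,3,5,1,4,5,1],[5,1,0,4,3,5,1,4,5,1],[5,1,0,4,3,5,1,4,5,1,4],[5,1,0,4,3,5,1,4,5,1,4,3],[5,1,0,4,3,5,1,0,4,5,1],[5,1,0,4,3,5,1,0,4,5,1,4],[5,1,0,4,3,5,1,0,4,5,1,4,3],[5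,1,0,4,3,5,1,0,5,1,4,5,1],[5,1,0,4,3,5,1,0,5,1,4,3,5,1],[5,1,0,4,3,5,1,0,5,1,4,3,5,1,4],[5,1,0,2,4,3,5,1,4,5,1,0],[5,1,0,4,3,5,1,4,5,1,0],[5,1,0,4,3,5,1,4,5,1,0,4],[5,1,0,4,3,5,1,4,5,1,0,4,3],[5,1,0,4,3,5,1,0,4,5,1,0],[5,1,0,4,3,5,1,0,4,5,1,0,4],[5,1,0,4,3,5,1,0,4,5,1,0,4,3],[5,1,0,4,3,5,1,0,5,1,4,5,1,0],[5,1,0,4,3,5,1,0,5,1,4,3,5,1,0],[5,1,0,4,3,5,1,0,5,1,4,3,5,1,0,4],[5,1,4,3,5,1,0,4,5,1,2],[5,1,4,3,5,1,0,4,5,1,5],[5,1,4,3,5,1,0,4,5,1,5,4],[5,1,4,3,5,1,0,4,5,1,5,4,3],[5,1,0,4,3,5,1,0,4,5,1,2],[5,1,0,4,3,5,1,0,4,5,1,2,4],[5,1,0,4,3,5,1,0,4,5,1,2,4,3],[5,1,0,4,3,5,1,0,4,5,1,4,5],[5,1,0,4,3,5,1,0,4,5,1,4,3,5],[5,1,0,4,3,5,1,0,4,5,1,4,3,5,4],[5,1,0,4,3,5,1,0,4,5,1,0,2],[5,1,0,4,3,5,1,0,4,5,1,0,2,4],[5,1,0,4,3,5,1,0,4,5,1,0,2,4,3],[5,1,0,4,3,5,1,0,4,5,1,0,4,5],[5,1,0,4,3,5,1,0,4,5,1,0,4,3,5],[5,1,0,4,3,5,1,0,4,5,1,0,4,3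,5,4],[5,1,0,4,3,5,1,0,4,5,1,0,4,5,1],[5,1,0,4,3,5,1,0,4,5,1,0,4,3,5,1],[5,1,0,4,3,5,1,0,4,5,1,0,4,3,5,1,4],[5,1,0,4,3,5,1,0,4,5,1,0,4,3,5,1,4,5]]"
definition uinc :: "nat list list" where "uinc = [[3],[],[3,4],[4],[3,4,5],[4,5],[3,4,5,1],[4,5,1],[3,4,5,1,0],[4,5,1,0],[4,5,1,2],[4,5,1,0,2],[4,5,1,0,2,1],[4,5,1,0,2,1,5],[4,5,1,0,2,1,5,4],[3,4,3],[4,3],[3,4,3,5],[4,3,5],[3,4,3,5,1],[4,3,5,1],[3,4,3,5,1,0],[4,3,5,1,0],[4,3,5,1,2],[4,3,5,1,0,2],[4,3,5,1,0,2,1],[4,3,5,1,0,2,1,5],[4,5,1,0,2,1,5,4,3],[3,4,3,5,4],[4,3,5,4],[3,4,3,5,1,4],[4,3,5,1,4],[3,4,3,5,1,0,4],[4,3,5,1,0,4],[4,3,5,1,2,4],[4,3,5,1,0,2,4],[4,3,5,1,0,2,1,4],[4,3,5,1,0,2,1,5,4],[4,3,5,1,0,2,1,5,4,3],[3,4,3,5,1,0,4,5],[4,3,5,1,2,4,5],[3,4,3,5,1,4,5],[4,3,5,1,0,2,4,5],[4,3,5,1,4,5],[4,3,5,1,0,4,5],[4,3,5,1,0,2,1,4,5],[4,3,5,1,0,2,1,4,5,4],[4,3,5,1,0,2,1,4,5,4,3],[3,4,3,5,1,4,5,1],[3,4,3,5,1,4,5,1,0],[4,3,5,1,4,5,1]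,[4,3,5,1,0,4,5,1],[4,3,5,1,0,2,1,4,5,1],[4,3,5,1,0,2,1,4,5,1,4],[4,3,5,1,0,2,1,4,5,1,4,3],[4,3,5,1,4,5,1,0],[4,3,5,1,0,4,5,1,0],[4,3,5,1,0,4,5,1,5],[4,3,5,1,0,4,5,1,5,4],[4,3,5,1,0,4,5,1,5,4,3]]"
definition img0 :: "nat list \<Rightarrow> nat list" where "img0 u = sort (map (appw u) [0,1,2])"
definition img1 :: "nat list \<Rightarrow> nat list" where "img1 u = sort (map (appw u) [0,1,11])"
definition wok :: "nat list \<Rightarrow> bool" where "wok u = (set u \<subseteq> {0,1,2,3,4,5})"
lemma ucoh_comp: "map img0 ucoh = cohL" by code_simp
lemma uinc_comp: "map img1 uinc = incL" by code_simp
lemma ucoh_ok: "list_all wok ucoh" by code_simp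
lemma uinc_ok: "list_all wok uinc" by code_simp

lemma sact_c_word: "I \<subseteq> {..<12} \<Longrightarrow> set u \<subseteq> MI \<Longrightarrow> sact (c ` I) (evw u) = c ` (appw u ` I)"
proof -
  assume I: "I \<subseteq> {..<12}" and u: "set u \<subseteq> MI"
  have "sact (c ` I) (evw u) = (\<lambda>i. cact (c i) (evw u)) ` I" by (simp add: sact_def image_image)
  also have "\<dots> = (\<lambda>i. c (appw u i)) ` I"
    by (rule image_cong) (use I u c_word in \<open>auto simp: cact_def\<close>)
  also have "\<dots> = c ` (appw u ` I)" by (simp add: image_image)
  finally show ?thesis .
qed

lemma evw_rev: "set u \<subseteq> MI \<Longrightarrow> evw (u @ rev u) = 1\<^sub>m 7"
proof (induction u)
  case Nil then show ?case by simp
next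
  case (Cons a u)
  have a: "a < 6" using Cons by (simp add: MI_iff)
  have l: "(a # u) @ rev (a # u) = a # ((u @ rev u) @ [a])" by simp
  have e: "evw ((u @ rev u) @ [a]) = evw (u @ rev u) * evw [a]" by (rule evw_append)
  have "evw ((a # u) @ rev (a # u)) = gM a * evw ((u @ rev u) @ [a])" by (simp only: l evw.simps)
  also have "\<dots> = gM a * (1\<^sub>m 7 * evw [a])" using Cons.IH Cons.prems e by simp
  also have "\<dots> = gM a * gM a"
    using left_mult_one_mat[OF gM_carrier, of a] right_mult_one_mat[OF gM_carrier, of a] by simp
  finally show ?case using gM_sq[OF a] by simp
qed

lemma sact_assoc: "S \<in> triples_L \<Longrightarrow> x \<in> carrier GL7 \<Longrightarrow> y \<in> carrier GL7 \<Longrightarrow>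
    sact (sact S x) y = sact S (x * y)"
proof -
  assume S: "S \<in> triples_L" and x: "x \<in> carrier GL7" and y: "y \<in> carrier GL7"
  have "sact (sact S x) y = (\<lambda>C. cact (cact C x) y) ` S" by (simp add: sact_def image_image)
  also have "\<dots> = (\<lambda>C. cact C (x * y)) ` S"
    apply (rule image_cong[OF refl]) apply (rule cact_assoc) using S x y triples_carrier by auto
  finally show ?thesis by (simp add: sact_def)
qed

lemma sact_one: "S \<in> triples_L \<Longrightarrow> sact S (1\<^sub>m 7) = S"
proof -
  assume S: "S \<in> triples_L"
  have "sact S (1\<^sub>m 7) = (\<lambda>C. C) ` S"
    unfolding sact_def by (rule image_cong) (use S cact_one triples_carrier in auto)
  then show ?thesis by simp
qed

lemma orbit_class:
  assumes K: "K \<subseteq> triples_L" and inv: "\<And>S m. S \<in> K \<Longrightarrow> m \<in> M_L \<Longrightarrow> sact S m \<in> K"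
    and Tz: "Tz \<in> K" and reach: "\<And>T. T \<in> K \<Longrightarrow> \<exists>u. set u \<subseteq> MI \<and> T = sact Tz (evw u)"
    and S: "S \<in> K"
  shows "orbit_L S = K"
proof
  show "orbit_L S \<subseteq> K" using inv S by (auto simp: orbit_L_def)
next
  show "K \<subseteq> orbit_L S"
  proof
    fix T assume T: "T \<in> K"
    obtain uS where uS: "set uS \<subseteq> MI" "S = sact Tz (evw uS)" using reach[OF S] by blast
    obtain uT where uT: "set uT \<subseteq> MI" "T = sact Tz (evw uT)" using reach[OF T] by blast
    have Tzt: "Tz \<in> triples_L" using Tz K by auto
    have "sact S (evw (rev uS)) = sact Tz (evw uS * evw (rev uS))"
      using sact_assoc[OF Tzt evw_GL7 evw_GL7] uS by simp
    also have "\<dots> = Tz" using evw_rev[OF uS(1)] sact_one[OF Tzt] by (simp add: evw_append)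
    finally have e: "sact S (evw (rev uS)) = Tz" .
    have St: "S \<in> triples_L" using S K by auto
    have ruS: "set (rev uS) \<subseteq> MI" using uS by simp
    have "sact S (evw (rev uS) * evw uT) = sact (sact S (evw (rev uS))) (evw uT)"
      using sact_assoc[OF St evw_GL7[OF ruS] evw_GL7[OF uT(1)]] by simp
    also have "\<dots> = T" using e uT(2) by simp
    finally have "T = sact S (evw (rev uS) * evw uT)" by simp
    also have "\<dots> = sact S (evw (rev uS @ uT))" by (simp add: evw_append)
    finally have "T = sact S (evw (rev uS @ uT))" .
    moreover have "evw (rev uS @ uT) \<in> M_L" using evw_M_L uS uT by simp
    ultimately show "T \<in> orbit_L S" by (auto simp: orbit_L_def)
  qed
qed

definition Coh :: "complex mat set set set" where "Coh = {S \<in> triples_L. L_coherent S}"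
definition Inc :: "complex mat set set set" where "Inc = {S \<in> triples_L. \<not> L_coherent S}"

lemma Coh_idx: "Coh = (\<lambda>I. c ` I) ` {I \<in> TI. coh I}"
  unfolding Coh_def triples_idx using coh_c by (auto simp: TI_def)
lemma Inc_idx: "Inc = (\<lambda>I. c ` I) ` {I \<in> TI. \<not> coh I}"
  unfolding Inc_def triples_idx using coh_c by (auto simp: TI_def)

lemma card_Coh: "card Coh = 160"
proof -
  have "{I \<in> TI. coh I} \<subseteq> Pow {..<12}" by (auto simp: TI_def)
  then show ?thesis unfolding Coh_idx using card_image[OF inj_on_subset[OF inj_cimg]] card_idx_coh by simp
qed
lemma card_Inc: "card Inc = 60"
proof -
  have "{I \<in> TI. \<not> coh I} \<subseteq> Pow {..<12}" by (auto simp: TI_def)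
  then show ?thesis unfolding Inc_idx using card_image[OF inj_on_subset[OF inj_cimg]] card_idx_inc by simp
qed

lemma reach_gen:
  assumes I0: "I0 \<subseteq> {..<12}" and imgdef: "\<And>u. img u = sort (map (appw u) l0)" and sl: "set l0 = I0"
    and uc: "map img us = L" and uok: "list_all wok us" and t: "t \<in> set L"
  shows "\<exists>u. set u \<subseteq> MI \<and> c ` set t = sact (c ` I0) (evw u)"
proof -
  obtain k where k: "k < length L" "t = L ! k" using t by (auto simp: in_set_conv_nth)
  let ?u = "us ! k"
  have ku: "k < length us" using k uc by auto
  have t': "t = sort (map (appw ?u) l0)" using k uc ku imgdef by auto
  have u: "set ?u \<subseteq> MI" using uok ku by (auto simp: list_all_iff wok_def MI_def)
  have "set t = appw ?u ` I0" using t' sl by simp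
  then show ?thesis using sact_c_word[OF I0 u] u by auto
qed

lemma Coh_orbit: "S \<in> Coh \<Longrightarrow> orbit_L S = Coh"
proof (rule orbit_class[where Tz = "c ` {0,1,2}"])
  show "Coh \<subseteq> triples_L" by (auto simp: Coh_def)
  show "\<And>S m. S \<in> Coh \<Longrightarrow> m \<in> M_L \<Longrightarrow> sact S m \<in> Coh" using inv_triple by (auto simp: Coh_def)
  have "[0,1,2] \<in> set cohL" by (simp add: cohL_def)
  then have "[0,1,2] \<in> set allT \<and> cohT [0,1,2]" unfolding cohL_eq[symmetric] by simp
  then have "set [0,1,2] \<in> {I \<in> TI. coh I}" using TI_allT cohT_coh by blast
  then show "c ` {0,1,2} \<in> Coh" unfolding Coh_idx by (intro image_eqI[where x="{0,1,2}"]) auto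
  fix T assume "T \<in> Coh"
  then obtain I where I: "I \<in> TI" "coh I" "T = c ` I" unfolding Coh_idx by auto
  then obtain t where t: "t \<in> set allT" "I = set t" using TI_allT by auto
  then have "t \<in> set cohL" using I cohT_coh unfolding cohL_eq[symmetric] by simp
  then show "\<exists>u. set u \<subseteq> MI \<and> T = sact (c ` {0,1,2}) (evw u)"
    using reach_gen[OF _ img0_def _ ucoh_comp ucoh_ok, of "{0,1,2}"] t I by auto
qed

lemma Inc_orbit: "S \<in> Inc \<Longrightarrow> orbit_L S = Inc"
proof (rule orbit_class[where Tz = "c ` {0,1,11}"])
  show "Inc \<subseteq> triples_L" by (auto simp: Inc_def)
  show "\<And>S m. S \<in> Inc \<Longrightarrow> m \<in> M_L \<Longrightarrow> sact S m \<in> Inc" using inv_triple by (auto simp: Inc_def)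
  have "[0,1,11] \<in> set incL" by (simp add: incL_def)
  then have "[0,1,11] \<in> set allT \<and> incT [0,1,11]" unfolding incL_eq[symmetric] by simp
  then have "set [0,1,11] \<in> {I \<in> TI. \<not> coh I}" using TI_allT incT_coh by blast
  then show "c ` {0,1,11} \<in> Inc" unfolding Inc_idx by (intro image_eqI[where x="{0,1,11}"]) auto
  fix T assume "T \<in> Inc"
  then obtain I where I: "I \<in> TI" "\<not> coh I" "T = c ` I" unfolding Inc_idx by auto
  then obtain t where t: "t \<in> set allT" "I = set t" using TI_allT by auto
  then have "t \<in> set incL" using I incT_coh unfolding incL_eq[symmetric] by simp
  then show "\<exists>u. set u \<subseteq> MI \<and> T = sact (c ` {0,1,11}) (evw u)"
    using reach_gen[OF _ img1_def _ uinc_comp uinc_ok, of "{0,1,11}"] t I by auto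
qed

lemma choose_12_3: "(12::nat) choose 3 = 220" by code_simp

theorem proposition6p6:
  shows "card cosets_L = 12 \<and>
         card triples_L = 220 \<and>
         orbit_L ` triples_L =
           {{S \<in> triples_L. L_coherent S}, {S \<in> triples_L. \<not> L_coherent S}} \<and>
         card {S \<in> triples_L. L_coherent S} = 160 \<and>
         card {S \<in> triples_L. \<not> L_coherent S} = 60"
proof -
  have c1: "card cosets_L = 12" by (rule card_cosets)
  have fin: "finite cosets_L" unfolding cosets_c by simp
  have c2: "card triples_L = 220" unfolding triples_L_def using n_subsets[OF fin, of 3] c1 choose_12_3 by simp
  have Cne: "Coh \<noteq> {}" using card_Coh by auto
  have Ine: "Inc \<noteq> {}" using card_Inc by auto
  have "orbit_L ` triples_L = {Coh, Inc}"
  proof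
    show "orbit_L ` triples_L \<subseteq> {Coh, Inc}"
      using Coh_orbit Inc_orbit by (auto simp: Coh_def Inc_def)
    have "Coh \<in> orbit_L ` triples_L" using Cne Coh_orbit by (force simp: Coh_def)
    moreover have "Inc \<in> orbit_L ` triples_L" using Ine Inc_orbit by (force simp: Inc_def)
    ultimately show "{Coh, Inc} \<subseteq> orbit_L ` triples_L" by auto
  qed
  then show ?thesis using c1 c2 card_Coh card_Inc by (simp add: Coh_def Inc_def)
qed


end
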